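(* An umbilic-free isometric immersion $f:M^2\to\mathbb{R}^m$ of a surface with flat normal bundle has semi-parallel Moebius second fundamental form if and only if the Moebius metric $\langle\cdot,\cdot\rangle^*$ has vanishing Gaussian curvature.
   Context: Let $f:M^n\to\mathbb{R}^{m}$ be an isometric immersion of a Riemannian manifold $(M^n,\langle\cdot,\cdot\rangle)$ with second fundamental form $\alpha$, mean curvature vector $\mathcal H=\frac1n\operatorname{tr}\alpha$ and normal connection $\nabla^\perp$ with curvature $R^\perp$. Put $\rho^2=\frac{n}{n-1}(\|\alpha\|^2-n\|\mathcal H\|^2)$; $f$ is umbilic-free if $\rho>0$ everywhere. The Moebius metric is $\langle\cdot,\cdot\rangle^*=\rho^2\langle\cdot,\cdot\rangle$, with Levi-Civita connection $\nabla^*$ and curvature $R^*$; the Moebius second fundamental form is $\beta=\rho(\alpha-\mathcal H\langle\cdot,\cdot\rangle)$. $f$ has semi-parallel Moebius second fundamental form if $R^\perp(X,Y)\beta(Z,W)-\beta(R^*(X,Y)Z,W)-\beta(Z,R^*(X,Y)W)=0$ for all tangent $X,Y,Z,W$. $f$ has flat normal bundle if $R^\perp=0$. *)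

theory Defs
  imports "HOL-Analysis.Analysis"
begin

text \<open>Local (chart) description of a surface immersion f : U \<subseteq> R^2 \<rightarrow> E, E a Euclidean
space (playing R^m).\<close>

definition pd :: "2 \<Rightarrow> (real^2 \<Rightarrow> 'a::real_normed_vector) \<Rightarrow> real^2 \<Rightarrow> 'a" where
  "pd i F x = vector_derivative (\<lambda>t. F (x + t *\<^sub>R axis i 1)) (at 0)"

fun iterpd :: "2 list \<Rightarrow> (real^2 \<Rightarrow> 'a::real_normed_vector) \<Rightarrow> real^2 \<Rightarrow> 'a" where
  "iterpd [] F = F"
| "iterpd (i # ks) F = pd i (iterpd ks F)"

definition smooth_on :: "(real^2) set \<Rightarrow> (real^2 \<Rightarrow> 'a::real_normed_vector) \<Rightarrow> bool" where
  "smooth_on U F \<longleftrightarrow> (\<forall>ks. continuous_on U (iterpd ks F) \<and>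
     (\<forall>i. \<forall>x\<in>U. ((\<lambda>t. iterpd ks F (x + t *\<^sub>R axis i 1)) has_vector_derivative
                     iterpd (i # ks) F x) (at 0)))"

definition immersion_on :: "(real^2) set \<Rightarrow> (real^2 \<Rightarrow> 'e::euclidean_space) \<Rightarrow> bool" where
  "immersion_on U f \<longleftrightarrow> open U \<and> smooth_on U f \<and>
     (\<forall>p\<in>U. inj (\<lambda>v::real^2. \<Sum>a\<in>UNIV. v $ a *\<^sub>R pd a f p))"

definition gmat :: "(real^2 \<Rightarrow> 'e::euclidean_space) \<Rightarrow> real^2 \<Rightarrow> real^2^2" where
  "gmat f p = (\<chi> a b. inner (pd a f p) (pd b f p))"

definition ginv :: "(real^2 \<Rightarrow> 'e::euclidean_space) \<Rightarrow> real^2 \<Rightarrow> real^2^2" where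
  "ginv f p = matrix_inv (gmat f p)"

definition tproj :: "(real^2 \<Rightarrow> 'e::euclidean_space) \<Rightarrow> real^2 \<Rightarrow> 'e \<Rightarrow> 'e" where
  "tproj f p v = (\<Sum>a\<in>UNIV. \<Sum>b\<in>UNIV. (ginv f p $ a $ b * inner v (pd b f p)) *\<^sub>R pd a f p)"

definition nproj :: "(real^2 \<Rightarrow> 'e::euclidean_space) \<Rightarrow> real^2 \<Rightarrow> 'e \<Rightarrow> 'e" where
  "nproj f p v = v - tproj f p v"

definition sff :: "(real^2 \<Rightarrow> 'e::euclidean_space) \<Rightarrow> real^2 \<Rightarrow> 2 \<Rightarrow> 2 \<Rightarrow> 'e" where
  "sff f p a b = nproj f p (pd a (pd b f) p)"

definition meancurv :: "(real^2 \<Rightarrow> 'e::euclidean_space) \<Rightarrow> real^2 \<Rightarrow> 'e" where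
  "meancurv f p = (1/2) *\<^sub>R (\<Sum>a\<in>UNIV. \<Sum>b\<in>UNIV. ginv f p $ a $ b *\<^sub>R sff f p a b)"

definition sff_norm2 :: "(real^2 \<Rightarrow> 'e::euclidean_space) \<Rightarrow> real^2 \<Rightarrow> real" where
  "sff_norm2 f p = (\<Sum>a\<in>UNIV. \<Sum>b\<in>UNIV. \<Sum>c\<in>UNIV. \<Sum>d\<in>UNIV.
      ginv f p $ a $ c * ginv f p $ b $ d * inner (sff f p a b) (sff f p c d))"

text \<open>rho^2 = n/(n-1) (|alpha|^2 - n |H|^2) with n = 2.\<close>
definition rho :: "(real^2 \<Rightarrow> 'e::euclidean_space) \<Rightarrow> real^2 \<Rightarrow> real" where
  "rho f p = sqrt (2 * (sff_norm2 f p - 2 * (norm (meancurv f p))^2))"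

definition umbilic_free :: "(real^2) set \<Rightarrow> (real^2 \<Rightarrow> 'e::euclidean_space) \<Rightarrow> bool" where
  "umbilic_free U f \<longleftrightarrow> (\<forall>p\<in>U. rho f p > 0)"

text \<open>Moebius metric g* = rho^2 g, its Christoffel symbols Gamma^c_ab (argument order a b c)
and curvature components: R*(d_i,d_j) d_k = sum_c moeb_curv f p i j k c d_c, where
R(X,Y) = nabla_X nabla_Y - nabla_Y nabla_X - nabla_[X,Y].\<close>
definition moeb_metric :: "(real^2 \<Rightarrow> 'e::euclidean_space) \<Rightarrow> real^2 \<Rightarrow> real^2^2" where
  "moeb_metric f p = (\<chi> a b. (rho f p)^2 * gmat f p $ a $ b)"

definition moeb_christ :: "(real^2 \<Rightarrow> 'e::euclidean_space) \<Rightarrow> real^2 \<Rightarrow> 2 \<Rightarrow> 2 \<Rightarrow> 2 \<Rightarrow> real" where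
  "moeb_christ f p a b c = (1/2) * (\<Sum>d\<in>UNIV. matrix_inv (moeb_metric f p) $ c $ d *
      (pd a (\<lambda>q. moeb_metric f q $ b $ d) p + pd b (\<lambda>q. moeb_metric f q $ a $ d) p
       - pd d (\<lambda>q. moeb_metric f q $ a $ b) p))"

definition moeb_curv :: "(real^2 \<Rightarrow> 'e::euclidean_space) \<Rightarrow> real^2 \<Rightarrow> 2 \<Rightarrow> 2 \<Rightarrow> 2 \<Rightarrow> 2 \<Rightarrow> real" where
  "moeb_curv f p i j k c =
     pd i (\<lambda>q. moeb_christ f q j k c) p - pd j (\<lambda>q. moeb_christ f q i k c) p
     + (\<Sum>e\<in>UNIV. moeb_christ f p j k e * moeb_christ f p i e c
                 - moeb_christ f p i k e * moeb_christ f p j e c)"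

definition moeb_gauss :: "(real^2 \<Rightarrow> 'e::euclidean_space) \<Rightarrow> real^2 \<Rightarrow> real" where
  "moeb_gauss f p = (\<Sum>c\<in>UNIV. moeb_curv f p 1 2 2 c * moeb_metric f p $ c $ 1)
                    / det (moeb_metric f p)"

definition moeb_sff :: "(real^2 \<Rightarrow> 'e::euclidean_space) \<Rightarrow> real^2 \<Rightarrow> 2 \<Rightarrow> 2 \<Rightarrow> 'e" where
  "moeb_sff f p a b = rho f p *\<^sub>R (sff f p a b - gmat f p $ a $ b *\<^sub>R meancurv f p)"

definition normal_curv :: "(real^2 \<Rightarrow> 'e::euclidean_space) \<Rightarrow> (real^2 \<Rightarrow> 'e) \<Rightarrow> real^2 \<Rightarrow> 2 \<Rightarrow> 2 \<Rightarrow> 'e" where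
  "normal_curv f \<xi> p i j =
     nproj f p (pd i (\<lambda>q. nproj f q (pd j \<xi> q)) p)
   - nproj f p (pd j (\<lambda>q. nproj f q (pd i \<xi> q)) p)"

definition normal_field :: "(real^2) set \<Rightarrow> (real^2 \<Rightarrow> 'e::euclidean_space) \<Rightarrow> (real^2 \<Rightarrow> 'e) \<Rightarrow> bool" where
  "normal_field U f \<xi> \<longleftrightarrow> smooth_on U \<xi> \<and> (\<forall>p\<in>U. \<forall>a. inner (\<xi> p) (pd a f p) = 0)"

definition flat_normal_bundle :: "(real^2) set \<Rightarrow> (real^2 \<Rightarrow> 'e::euclidean_space) \<Rightarrow> bool" where
  "flat_normal_bundle U f \<longleftrightarrow>
     (\<forall>\<xi>. normal_field U f \<xi> \<longrightarrow> (\<forall>p\<in>U. \<forall>i j. normal_curv f \<xi> p i j = 0))"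

text \<open>Semi-parallel Moebius second fundamental form, on the coordinate frame
(all terms are tensorial, so this is equivalent to the condition for all X,Y,Z,W).\<close>
definition semi_parallel_moeb_sff :: "(real^2) set \<Rightarrow> (real^2 \<Rightarrow> 'e::euclidean_space) \<Rightarrow> bool" where
  "semi_parallel_moeb_sff U f \<longleftrightarrow>
     (\<forall>p\<in>U. \<forall>i j k l.
        normal_curv f (\<lambda>q. moeb_sff f q k l) p i j
        - (\<Sum>c\<in>UNIV. moeb_curv f p i j k c *\<^sub>R moeb_sff f p c l)
        - (\<Sum>c\<in>UNIV. moeb_curv f p i j l c *\<^sub>R moeb_sff f p k c) = 0)"

end

theory Submission imports Defs begin

lemma inv2_all:
  fixes A :: "real^2^2"
  assumes d: "det A \<noteq> 0"
  shows "matrix_inv A = (\<chi> i j. if i = 1 \<and> j = 1 then A$2$2 / det A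
                          else if i = 1 \<and> j = 2 then - A$1$2 / det A
                          else if i = 2 \<and> j = 1 then - A$2$1 / det A
                          else A$1$1 / det A)
     \<and> A ** matrix_inv A = mat 1 \<and> matrix_inv A ** A = mat 1"
    (is "_ = ?B \<and> _")
proof -
  have dd: "det A = A$1$1 * A$2$2 - A$1$2 * A$2$1" by (rule det_2)
  have AB: "A ** ?B = mat 1"
    using d unfolding dd
    by (simp add: vec_eq_iff forall_2 matrix_matrix_mult_def sum_2 mat_def)
       (simp_all add: divide_simps; simp add: algebra_simps)
  have BA: "?B ** A = mat 1"
    using d unfolding dd
    by (simp add: vec_eq_iff forall_2 matrix_matrix_mult_def sum_2 mat_def)
       (simp_all add: divide_simps; simp add: algebra_simps)
  have "\<exists>M. A ** M = mat 1 \<and> M ** A = mat 1" using AB BA by blast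
  then have M: "A ** matrix_inv A = mat 1 \<and> matrix_inv A ** A = mat 1"
    unfolding matrix_inv_def by (rule someI_ex)
  have "matrix_inv A = matrix_inv A ** (A ** ?B)" using AB by (simp add: matrix_mul_rid)
  also have "\<dots> = (matrix_inv A ** A) ** ?B" by (simp add: matrix_mul_assoc)
  also have "\<dots> = ?B" using M by (simp add: matrix_mul_lid)
  finally show ?thesis using M by blast
qed

lemma inv2_entries:
  fixes A :: "real^2^2"
  assumes d: "det A \<noteq> 0"
  shows "matrix_inv A $ 1 $ 1 = A$2$2 / det A" "matrix_inv A $ 1 $ 2 = - A$1$2 / det A"
        "matrix_inv A $ 2 $ 1 = - A$2$1 / det A" "matrix_inv A $ 2 $ 2 = A$1$1 / det A"
  using inv2_all[OF d] by simp_all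

section \<open>Line derivatives\<close>

definition lined :: "2 \<Rightarrow> (real^2 \<Rightarrow> 'a::real_normed_vector) \<Rightarrow> real^2 \<Rightarrow> 'a \<Rightarrow> bool" where
  "lined i F x D \<longleftrightarrow> ((\<lambda>t. F (x + t *\<^sub>R axis i 1)) has_vector_derivative D) (at 0)"

lemma lined_pd: "lined i F x D \<Longrightarrow> pd i F x = D"
  unfolding lined_def pd_def by (rule vector_derivative_at)

lemma ev_line:
  fixes x v :: "'a::real_normed_vector"
  assumes "open U" "x \<in> U"
  shows "eventually (\<lambda>t. x + t *\<^sub>R v \<in> U) (nhds (0::real))"
proof -
  have c: "continuous_on UNIV (\<lambda>t::real. x + t *\<^sub>R v)" by (intro continuous_intros)
  have "open ((\<lambda>t::real. x + t *\<^sub>R v) -` U)"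
    using continuous_on_open_vimage[of UNIV "\<lambda>t::real. x + t *\<^sub>R v"] c assms(1) by auto
  moreover have "(0::real) \<in> (\<lambda>t::real. x + t *\<^sub>R v) -` U" using assms by simp
  ultimately show ?thesis unfolding eventually_nhds by blast
qed

lemma pd_cong:
  assumes "open U" "x \<in> U" "\<And>y. y \<in> U \<Longrightarrow> F y = G y"
  shows "pd i F x = pd i G x"
  unfolding pd_def
  by (rule vector_derivative_cong_eq)
     (use ev_line[OF assms(1,2), of "axis i 1"] assms(3) in \<open>auto elim: eventually_mono\<close>)

lemma lined_cong:
  assumes "open U" "x \<in> U" "\<And>y. y \<in> U \<Longrightarrow> F y = G y" "lined i F x D"
  shows "lined i G x D"
proof -
  have "((\<lambda>t. F (x + t *\<^sub>R axis i 1)) has_vector_derivative D) (at 0 within UNIV)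
     = ((\<lambda>t. G (x + t *\<^sub>R axis i 1)) has_vector_derivative D) (at 0 within UNIV)"
    by (rule has_vector_derivative_cong_ev)
       (use ev_line[OF assms(1,2), of "axis i 1"] assms in \<open>auto elim: eventually_mono\<close>)
  then show ?thesis using assms(4) unfolding lined_def by simp
qed

definition sq :: "(real^2) set \<Rightarrow> (real^2 \<Rightarrow> 'a::real_normed_vector) \<Rightarrow> bool" where
  "sq U F \<longleftrightarrow> continuous_on U F \<and> (\<forall>i. \<forall>x\<in>U. lined i F x (pd i F x))"

lemma smooth_iff: "smooth_on U F \<longleftrightarrow> (\<forall>ks. sq U (iterpd ks F))"
  unfolding smooth_on_def sq_def lined_def by simp

lemma sq_cong:
  assumes "open U" "\<And>y. y \<in> U \<Longrightarrow> F y = G y" "sq U F"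
  shows "sq U G"
proof -
  have "continuous_on U G" using assms continuous_on_cong[of U U F G] unfolding sq_def by auto
  moreover have "lined i G x (pd i G x)" if "x \<in> U" for i x
  proof -
    have "lined i F x (pd i F x)" using assms(3) that unfolding sq_def by blast
    then have "lined i G x (pd i F x)" using lined_cong[OF assms(1) that] assms(2) by blast
    then show ?thesis using pd_cong[OF assms(1) that, of F G i] assms(2) by simp
  qed
  ultimately show ?thesis unfolding sq_def by blast
qed

lemma smooth_coind:
  assumes U: "open U" and S0: "S F"
    and SQ: "\<And>G. S G \<Longrightarrow> sq U G"
    and SD: "\<And>G i. S G \<Longrightarrow> \<exists>H. S H \<and> (\<forall>x\<in>U. H x = pd i G x)"
  shows "smooth_on U F"
proof -
  have "\<exists>H. S H \<and> (\<forall>x\<in>U. H x = iterpd ks F x)" for ks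
  proof (induction ks)
    case Nil then show ?case using S0 by auto
  next
    case (Cons i ks)
    then obtain H where H: "S H" "\<forall>x\<in>U. H x = iterpd ks F x" by blast
    obtain H' where H': "S H'" "\<forall>x\<in>U. H' x = pd i H x" using SD[OF H(1)] by blast
    have "\<forall>x\<in>U. H' x = iterpd (i # ks) F x"
      using H' pd_cong[OF U, of _ H "iterpd ks F" i] H(2) by simp
    then show ?case using H' by blast
  qed
  then show ?thesis unfolding smooth_iff
    using SQ sq_cong[OF U] by metis
qed

lemma iterpd_snoc: "iterpd (ks @ [i]) F = iterpd ks (pd i F)"
  by (induction ks) auto

lemma smooth_pd: "smooth_on U F \<Longrightarrow> smooth_on U (pd i F)"
  unfolding smooth_iff by (metis iterpd_snoc)

lemma smooth_sq: "smooth_on U F \<Longrightarrow> sq U F"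
  unfolding smooth_iff by (metis iterpd.simps(1))

lemma smooth_cong:
  assumes "open U" "smooth_on U F" "\<And>y. y \<in> U \<Longrightarrow> F y = G y"
  shows "smooth_on U G"
proof (rule smooth_coind[OF assms(1), where S = "\<lambda>H. \<exists>F. smooth_on U F \<and> (\<forall>y\<in>U. F y = H y)"])
  show "\<exists>F. smooth_on U F \<and> (\<forall>y\<in>U. F y = G y)" using assms by blast
next
  fix H assume "\<exists>F. smooth_on U F \<and> (\<forall>y\<in>U. F y = H y)"
  then show "sq U H" using smooth_sq sq_cong[OF assms(1)] by metis
next
  fix H i assume "\<exists>F. smooth_on U F \<and> (\<forall>y\<in>U. F y = H y)"
  then obtain F where F: "smooth_on U F" "\<forall>y\<in>U. F y = H y" by blast
  show "\<exists>H'. (\<exists>F. smooth_on U F \<and> (\<forall>y\<in>U. F y = H' y)) \<and> (\<forall>x\<in>U. H' x = pd i H x)"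
  proof (rule exI[of _ "pd i F"], intro conjI)
    show "\<exists>F'. smooth_on U F' \<and> (\<forall>y\<in>U. F' y = pd i F y)" using F smooth_pd by blast
    show "\<forall>x\<in>U. pd i F x = pd i H x" using F pd_cong[OF assms(1), of _ F H i] by auto
  qed
qed

section \<open>Generated algebra of smooth real functions\<close>

lemma lined_real:
  fixes F :: "real^2 \<Rightarrow> real"
  shows "lined i F x D \<longleftrightarrow> ((\<lambda>t. F (x + t *\<^sub>R axis i 1)) has_real_derivative D) (at 0)"
  unfolding lined_def has_real_derivative_iff_has_vector_derivative ..

lemma sq_const: "sq U (\<lambda>_. c)"
proof -
  have l: "lined i (\<lambda>_. c) x 0" for i x unfolding lined_def by (rule has_vector_derivative_const)
  show ?thesis unfolding sq_def using l lined_pd[OF l] by (simp add: l)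
qed

lemma smooth_const:
  fixes c :: "'a::real_normed_vector"
  assumes U: "open U"
  shows "smooth_on U (\<lambda>_. c)"
proof (rule smooth_coind[OF U, where S = "\<lambda>H. \<exists>c. \<forall>y\<in>U. H y = c"])
  show "\<exists>c'. \<forall>y\<in>U. c = c'" by blast
next
  fix G :: "real^2 \<Rightarrow> 'a" assume "\<exists>c. \<forall>y\<in>U. G y = c"
  then obtain c where "\<forall>y\<in>U. G y = c" by blast
  then show "sq U G" using sq_cong[OF U, of "\<lambda>_. c" G] sq_const by metis
next
  fix G :: "real^2 \<Rightarrow> 'a" and i assume "\<exists>c. \<forall>y\<in>U. G y = c"
  then obtain c where c: "\<forall>y\<in>U. G y = c" by blast
  have l: "lined i (\<lambda>_. c) x 0" for x unfolding lined_def by (rule has_vector_derivative_const)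
  have "\<forall>x\<in>U. 0 = pd i G x"
    using pd_cong[OF U, of _ "\<lambda>_. c" G i] c lined_pd[OF l] by auto
  then show "\<exists>H. (\<exists>c. \<forall>y\<in>U. H y = c) \<and> (\<forall>x\<in>U. H x = pd i G x)"
    by (intro exI[of _ "\<lambda>_. 0"]) auto
qed

inductive genR :: "(real^2) set \<Rightarrow> (real^2 \<Rightarrow> real) \<Rightarrow> bool" for U where
  gbase: "smooth_on U F \<Longrightarrow> genR U F"
| gcong: "genR U F \<Longrightarrow> (\<forall>y\<in>U. F y = G y) \<Longrightarrow> genR U G"
| gadd: "genR U F \<Longrightarrow> genR U G \<Longrightarrow> genR U (\<lambda>x. F x + G x)"
| gmult: "genR U F \<Longrightarrow> genR U G \<Longrightarrow> genR U (\<lambda>x. F x * G x)"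
| ginv: "genR U F \<Longrightarrow> (\<forall>y\<in>U. F y \<noteq> 0) \<Longrightarrow> genR U (\<lambda>x. inverse (F x))"
| gsqrt: "genR U F \<Longrightarrow> (\<forall>y\<in>U. F y > 0) \<Longrightarrow> genR U (\<lambda>x. sqrt (F x))"

lemma genR_const: "open U \<Longrightarrow> genR U (\<lambda>_. c)"
  by (rule gbase) (rule smooth_const)

lemma lined_eqD: "lined i F x D \<Longrightarrow> D = D' \<Longrightarrow> lined i F x D'" by simp

lemma genR_key:
  assumes "genR U F" "open U"
  shows "continuous_on U F \<and> (\<forall>i. \<exists>G. genR U G \<and> (\<forall>x\<in>U. lined i F x (G x)))"
  using assms(1)
proof induction
  case (gbase F)
  then show ?case using smooth_sq[OF gbase] smooth_pd[OF gbase] genR.gbase unfolding sq_def by blast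
next
  case (gcong F G)
  have "continuous_on U G" using gcong continuous_on_cong[of U U F G] by auto
  moreover have "\<exists>H. genR U H \<and> (\<forall>x\<in>U. lined i G x (H x))" for i
  proof -
    obtain H where H: "genR U H" "\<forall>x\<in>U. lined i F x (H x)" using gcong by blast
    then show ?thesis using lined_cong[OF assms(2)] gcong(2) by blast
  qed
  ultimately show ?case by blast
next
  case (gadd F G)
  have "continuous_on U (\<lambda>x. F x + G x)" using gadd by (intro continuous_intros) auto
  moreover have "\<exists>H. genR U H \<and> (\<forall>x\<in>U. lined i (\<lambda>x. F x + G x) x (H x))" for i
  proof -
    obtain F' where F': "genR U F'" "\<forall>x\<in>U. lined i F x (F' x)" using gadd by blast
    obtain G' where G': "genR U G'" "\<forall>x\<in>U. lined i G x (G' x)" using gadd by blast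
    have "\<forall>x\<in>U. lined i (\<lambda>x. F x + G x) x (F' x + G' x)"
    proof
      fix x assume x: "x \<in> U"
      show "lined i (\<lambda>x. F x + G x) x (F' x + G' x)"
        using F'(2) G'(2) x unfolding lined_real by (intro DERIV_add) auto
    qed
    then show ?thesis using genR.gadd[OF F'(1) G'(1)] by blast
  qed
  ultimately show ?case by blast
next
  case (gmult F G)
  have "continuous_on U (\<lambda>x. F x * G x)" using gmult by (intro continuous_intros) auto
  moreover have "\<exists>H. genR U H \<and> (\<forall>x\<in>U. lined i (\<lambda>x. F x * G x) x (H x))" for i
  proof -
    obtain F' where F': "genR U F'" "\<forall>x\<in>U. lined i F x (F' x)" using gmult by blast
    obtain G' where G': "genR U G'" "\<forall>x\<in>U. lined i G x (G' x)" using gmult by blast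
    have "\<forall>x\<in>U. lined i (\<lambda>x. F x * G x) x (F' x * G x + G' x * F x)"
    proof
      fix x assume x: "x \<in> U"
      have "((\<lambda>t. F (x + t *\<^sub>R axis i 1) * G (x + t *\<^sub>R axis i 1)) has_real_derivative
          F' x * G (x + 0 *\<^sub>R axis i 1) + G' x * F (x + 0 *\<^sub>R axis i 1)) (at 0)"
        using F'(2) G'(2) x unfolding lined_real by (intro DERIV_mult) auto
      then show "lined i (\<lambda>x. F x * G x) x (F' x * G x + G' x * F x)"
        unfolding lined_real by simp
    qed
    moreover have "genR U (\<lambda>x. F' x * G x + G' x * F x)"
      by (rule genR.gadd[OF genR.gmult genR.gmult]) (use F'(1) G'(1) gmult in auto)
    ultimately show ?thesis by blast
  qed
  ultimately show ?case by blast
next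
  case (ginv F)
  have "continuous_on U (\<lambda>x. inverse (F x))" using ginv by (intro continuous_intros) auto
  moreover have "\<exists>H. genR U H \<and> (\<forall>x\<in>U. lined i (\<lambda>x. inverse (F x)) x (H x))" for i
  proof -
    obtain F' where F': "genR U F'" "\<forall>x\<in>U. lined i F x (F' x)" using ginv by blast
    have "\<forall>x\<in>U. lined i (\<lambda>x. inverse (F x)) x ((\<lambda>_. -1) x * (F' x * (inverse (F x) * inverse (F x))))"
    proof
      fix x assume x: "x \<in> U"
      have "((\<lambda>t. inverse (F (x + t *\<^sub>R axis i 1))) has_real_derivative
              - (F' x * inverse ((F (x + 0 *\<^sub>R axis i 1)) ^ Suc (Suc 0)))) (at 0)"
        using F'(2) x ginv(2) unfolding lined_real by (intro DERIV_inverse_fun) auto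
      then show "lined i (\<lambda>x. inverse (F x)) x ((\<lambda>_. -1) x * (F' x * (inverse (F x) * inverse (F x))))"
        unfolding lined_real by (simp add: power2_eq_square inverse_mult_distrib)
    qed
    moreover have "genR U (\<lambda>x. (\<lambda>_. -1) x * (F' x * (inverse (F x) * inverse (F x))))"
      using F'(1) ginv assms(2) by (intro genR.gadd genR.gmult genR.ginv genR.gsqrt genR_const) auto
    ultimately show ?thesis by blast
  qed
  ultimately show ?case by blast
next
  case (gsqrt F)
  have "continuous_on U (\<lambda>x. sqrt (F x))" using gsqrt by (intro continuous_intros) auto
  moreover have "\<exists>H. genR U H \<and> (\<forall>x\<in>U. lined i (\<lambda>x. sqrt (F x)) x (H x))" for i
  proof -
    obtain F' where F': "genR U F'" "\<forall>x\<in>U. lined i F x (F' x)" using gsqrt by blast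
    have "\<forall>x\<in>U. lined i (\<lambda>x. sqrt (F x)) x (inverse (sqrt (F x) * (\<lambda>_. 2) x) * F' x)"
    proof
      fix x assume x: "x \<in> U"
      have "((\<lambda>t. sqrt (F (x + t *\<^sub>R axis i 1))) has_real_derivative
              (inverse (sqrt (F x)) / 2) * F' x) (at 0)"
        using F'(2) x gsqrt(2)
        by (intro DERIV_chain2[of sqrt] DERIV_real_sqrt) (auto simp: lined_real intro!: DERIV_real_sqrt)
      then show "lined i (\<lambda>x. sqrt (F x)) x (inverse (sqrt (F x) * (\<lambda>_. 2) x) * F' x)"
        unfolding lined_real by (simp add: divide_simps)
    qed
    moreover have "genR U (\<lambda>x. inverse (sqrt (F x) * (\<lambda>_. 2) x) * F' x)"
      using F'(1) gsqrt assms(2) by (intro genR.gadd genR.gmult genR.ginv genR.gsqrt genR_const) auto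
    ultimately show ?thesis by blast
  qed
  ultimately show ?case by blast
qed

lemma genR_smooth:
  assumes "genR U F" "open U"
  shows "smooth_on U F"
proof (rule smooth_coind[OF assms(2), where S = "genR U"])
  show "genR U F" by fact
next
  fix G assume G: "genR U G"
  have "lined i G x (pd i G x)" if "x \<in> U" for i x
  proof -
    obtain H where "\<forall>x\<in>U. lined i G x (H x)" using genR_key[OF G assms(2)] by blast
    then show ?thesis using that lined_pd by metis
  qed
  then show "sq U G" using genR_key[OF G assms(2)] unfolding sq_def by blast
next
  fix G i assume G: "genR U G"
  obtain H where "genR U H" "\<forall>x\<in>U. lined i G x (H x)" using genR_key[OF G assms(2)] by blast
  then show "\<exists>H. genR U H \<and> (\<forall>x\<in>U. H x = pd i G x)" using lined_pd by metis
qed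

lemma genR_pd: "genR U F \<Longrightarrow> open U \<Longrightarrow> genR U (pd i F)"
  by (rule gbase, rule smooth_pd, rule genR_smooth)

lemma genR_lined: "genR U F \<Longrightarrow> open U \<Longrightarrow> x \<in> U \<Longrightarrow> lined i F x (pd i F x)"
  using smooth_sq[OF genR_smooth] unfolding sq_def by blast

lemma genR_neg: "genR U F \<Longrightarrow> open U \<Longrightarrow> genR U (\<lambda>x. - F x)"
proof -
  assume "genR U F" "open U"
  then have "genR U (\<lambda>x. (\<lambda>_. -1::real) x * F x)" by (intro genR.gmult genR_const)
  then show ?thesis by simp
qed

lemma genR_diff: "genR U F \<Longrightarrow> genR U G \<Longrightarrow> open U \<Longrightarrow> genR U (\<lambda>x. F x - G x)"
  using gadd[OF _ genR_neg[of U G]] by simp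

lemma genR_divide: "genR U F \<Longrightarrow> genR U G \<Longrightarrow> \<forall>y\<in>U. G y \<noteq> 0 \<Longrightarrow> genR U (\<lambda>x. F x / G x)"
  using gmult[OF _ ginv[of U G]] by (simp add: divide_inverse)

lemma genR_sum:
  assumes "open U" "finite A" "\<And>a. a \<in> A \<Longrightarrow> genR U (F a)"
  shows "genR U (\<lambda>x. \<Sum>a\<in>A. F a x)"
  using assms(2,3)
proof (induction A rule: finite_induct)
  case empty then show ?case using genR_const[OF assms(1), of 0] by simp
next
  case (insert a A) then show ?case by (simp add: gadd)
qed

lemma sq_linear:
  assumes L: "bounded_linear L" and V: "sq U V"
  shows "sq U (\<lambda>x. L (V x))" and "\<And>i x. x \<in> U \<Longrightarrow> pd i (\<lambda>x. L (V x)) x = L (pd i V x)"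
proof -
  have l: "lined i (\<lambda>x. L (V x)) x (L (pd i V x))" if "x \<in> U" for i x
    using V that bounded_linear.has_vector_derivative[OF L] unfolding sq_def lined_def by blast
  then show "\<And>i x. x \<in> U \<Longrightarrow> pd i (\<lambda>x. L (V x)) x = L (pd i V x)" using lined_pd by blast
  moreover have "continuous_on U (\<lambda>x. L (V x))"
    using V bounded_linear.continuous_on[OF L] unfolding sq_def by blast
  ultimately show "sq U (\<lambda>x. L (V x))" using l unfolding sq_def by simp
qed

lemma smooth_linear:
  assumes L: "bounded_linear L" and U: "open U" and V: "smooth_on U V"
  shows "smooth_on U (\<lambda>x. L (V x))"
proof (rule smooth_coind[OF U, where S = "\<lambda>W. \<exists>V. smooth_on U V \<and> (\<forall>x\<in>U. L (V x) = W x)"])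
  show "\<exists>V'. smooth_on U V' \<and> (\<forall>x\<in>U. L (V' x) = L (V x))" using V by blast
next
  fix W assume "\<exists>V. smooth_on U V \<and> (\<forall>x\<in>U. L (V x) = W x)"
  then obtain V where "smooth_on U V" "\<forall>x\<in>U. L (V x) = W x" by blast
  then show "sq U W" using sq_cong[OF U, of "\<lambda>x. L (V x)" W] sq_linear(1)[OF L smooth_sq] by blast
next
  fix W i assume "\<exists>V. smooth_on U V \<and> (\<forall>x\<in>U. L (V x) = W x)"
  then obtain V where V: "smooth_on U V" "\<forall>x\<in>U. L (V x) = W x" by blast
  have "\<forall>x\<in>U. L (pd i V x) = pd i W x"
    using sq_linear(2)[OF L smooth_sq[OF V(1)]] pd_cong[OF U, of _ "\<lambda>x. L (V x)" W i] V(2) by simp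
  then show "\<exists>H. (\<exists>V. smooth_on U V \<and> (\<forall>x\<in>U. L (V x) = H x)) \<and> (\<forall>x\<in>U. H x = pd i W x)"
    using smooth_pd[OF V(1)] by (intro exI[of _ "\<lambda>x. L (pd i V x)"]) blast
qed

lemma pd_linear:
  assumes L: "bounded_linear L" and V: "smooth_on U V" and x: "x \<in> U"
  shows "pd i (\<lambda>x. L (V x)) x = L (pd i V x)"
  using sq_linear(2)[OF L smooth_sq[OF V] x] .

lemma sq_add:
  assumes "sq U F" "sq U G"
  shows "sq U (\<lambda>x. F x + G x)" and "\<And>i x. x \<in> U \<Longrightarrow> pd i (\<lambda>x. F x + G x) x = pd i F x + pd i G x"
proof -
  have l: "lined i (\<lambda>x. F x + G x) x (pd i F x + pd i G x)" if "x \<in> U" for i x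
    using assms that has_vector_derivative_add unfolding sq_def lined_def by blast
  then show "\<And>i x. x \<in> U \<Longrightarrow> pd i (\<lambda>x. F x + G x) x = pd i F x + pd i G x" using lined_pd by blast
  then show "sq U (\<lambda>x. F x + G x)" using l assms continuous_on_add
    unfolding sq_def by (simp add: continuous_on_add)
qed

lemma smooth_add:
  assumes U: "open U" and F: "smooth_on U F" and G: "smooth_on U G"
  shows "smooth_on U (\<lambda>x. F x + G x)"
proof (rule smooth_coind[OF U, where S = "\<lambda>W. \<exists>F G. smooth_on U F \<and> smooth_on U G \<and> (\<forall>x\<in>U. F x + G x = W x)"])
  show "\<exists>F' G'. smooth_on U F' \<and> smooth_on U G' \<and> (\<forall>x\<in>U. F' x + G' x = F x + G x)" using F G by blast
next
  fix W assume "\<exists>F G. smooth_on U F \<and> smooth_on U G \<and> (\<forall>x\<in>U. F x + G x = W x)"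
  then obtain F G where "smooth_on U F" "smooth_on U G" "\<forall>x\<in>U. F x + G x = W x" by blast
  then show "sq U W" using sq_cong[OF U, of "\<lambda>x. F x + G x" W] sq_add(1)[OF smooth_sq smooth_sq] by blast
next
  fix W i assume "\<exists>F G. smooth_on U F \<and> smooth_on U G \<and> (\<forall>x\<in>U. F x + G x = W x)"
  then obtain F G where FG: "smooth_on U F" "smooth_on U G" "\<forall>x\<in>U. F x + G x = W x" by blast
  have "\<forall>x\<in>U. pd i F x + pd i G x = pd i W x"
    using sq_add(2)[OF smooth_sq[OF FG(1)] smooth_sq[OF FG(2)]] pd_cong[OF U, of _ "\<lambda>x. F x + G x" W i] FG(3) by simp
  then show "\<exists>H. (\<exists>F G. smooth_on U F \<and> smooth_on U G \<and> (\<forall>x\<in>U. F x + G x = H x)) \<and> (\<forall>x\<in>U. H x = pd i W x)"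
    using smooth_pd[OF FG(1)] smooth_pd[OF FG(2)] by (intro exI[of _ "\<lambda>x. pd i F x + pd i G x"]) blast
qed

lemma smooth_sum:
  assumes U: "open U" and "finite A" and "\<And>a. a \<in> A \<Longrightarrow> smooth_on U (F a)"
  shows "smooth_on U (\<lambda>x. \<Sum>a\<in>A. F a x)"
  using assms(2,3)
proof (induction A rule: finite_induct)
  case empty then show ?case using smooth_const[OF U, of 0] by simp
next
  case (insert a A) then show ?case using smooth_add[OF U, of "F a" "\<lambda>x. \<Sum>a\<in>A. F a x"] by simp
qed

lemma smooth_components:
  fixes V :: "real^2 \<Rightarrow> 'e::euclidean_space"
  assumes U: "open U" and C: "\<And>b. b \<in> Basis \<Longrightarrow> genR U (\<lambda>x. inner (V x) b)"
  shows "smooth_on U V"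
proof -
  have "smooth_on U (\<lambda>x. \<Sum>b\<in>Basis. (\<lambda>r. r *\<^sub>R b) (inner (V x) b))"
    by (rule smooth_sum[OF U]) (auto intro!: smooth_linear[OF bounded_linear_scaleR_left U] genR_smooth C U)
  then show ?thesis by (simp add: euclidean_representation)
qed

lemma genR_comp:
  fixes V :: "real^2 \<Rightarrow> 'e::real_inner"
  assumes "open U" "smooth_on U V"
  shows "genR U (\<lambda>x. inner (V x) w)"
  by (rule gbase, rule smooth_linear[OF bounded_linear_inner_left assms])

lemma genR_inner:
  fixes V W :: "real^2 \<Rightarrow> 'e::euclidean_space"
  assumes U: "open U" and "smooth_on U V" "smooth_on U W"
  shows "genR U (\<lambda>x. inner (V x) (W x))"
proof -
  have "genR U (\<lambda>x. \<Sum>b\<in>Basis. inner (V x) b * inner (W x) b)"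
    by (rule genR_sum[OF U]) (auto intro!: gmult genR_comp assms)
  then show ?thesis by (simp add: euclidean_inner[symmetric])
qed

section \<open>Symmetry of second partial derivatives\<close>

lemma lined_shift:
  fixes G :: "real^2 \<Rightarrow> real"
  assumes "lined i G (y + s *\<^sub>R axis i 1) D"
  shows "((\<lambda>t. G (y + t *\<^sub>R axis i 1)) has_real_derivative D) (at s)"
proof -
  have "((\<lambda>t. G ((y + s *\<^sub>R axis i 1) + t *\<^sub>R axis i 1)) has_real_derivative D) (at 0)"
    using assms unfolding lined_real .
  moreover have "(\<lambda>t. G ((y + s *\<^sub>R axis i 1) + t *\<^sub>R axis i 1)) = (\<lambda>t. (\<lambda>t. G (y + t *\<^sub>R axis i 1)) (t + s))"
    by (simp add: algebra_simps)
  ultimately show ?thesis using DERIV_shift[of "\<lambda>t. G (y + t *\<^sub>R axis i 1)" D 0 s] by simp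
qed

lemma dist_add_self: "dist x (x + v) = norm (v::'a::real_normed_vector)"
  by (simp add: dist_norm norm_minus_commute[of x])

lemma delta_lemma:
  fixes F :: "real^2 \<Rightarrow> real"
  assumes S: "smooth_on U F" and B: "ball x r \<subseteq> U" and h: "0 < h" "2*h < r"
  shows "\<exists>a b. 0<a \<and> a<h \<and> 0<b \<and> b<h \<and>
    F (x + h *\<^sub>R axis i 1 + h *\<^sub>R axis j 1) - F (x + h *\<^sub>R axis i 1) - F (x + h *\<^sub>R axis j 1) + F x
     = h * h * pd j (pd i F) (x + a *\<^sub>R axis i 1 + b *\<^sub>R axis j 1)"
proof -
  define ei :: "real^2" where "ei = axis i 1"
  define ej :: "real^2" where "ej = axis j 1"
  have inU: "x + a *\<^sub>R ei + b *\<^sub>R ej \<in> U" if "0 \<le> a" "a \<le> h" "0 \<le> b" "b \<le> h" for a b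
  proof -
    have "norm (a *\<^sub>R ei + b *\<^sub>R ej) \<le> norm (a *\<^sub>R ei) + norm (b *\<^sub>R ej)" by (rule norm_triangle_ineq)
    also have "\<dots> = a + b" using that by (simp add: ei_def ej_def)
    finally have "norm (a *\<^sub>R ei + b *\<^sub>R ej) < r" using that h by simp
    moreover have "dist x (x + a *\<^sub>R ei + b *\<^sub>R ej) = norm (a *\<^sub>R ei + b *\<^sub>R ej)"
      using dist_add_self[of x "a *\<^sub>R ei + b *\<^sub>R ej"] by (simp add: add.assoc)
    ultimately show ?thesis using B by auto
  qed
  have l1: "lined i F y (pd i F y)" if "y \<in> U" for y using smooth_sq[OF S] that unfolding sq_def by blast
  have l2: "lined j (pd i F) y (pd j (pd i F) y)" if "y \<in> U" for y
    using smooth_sq[OF smooth_pd[OF S]] that unfolding sq_def by blast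
  define \<phi> where "\<phi> s = F (x + s *\<^sub>R ei + h *\<^sub>R ej) - F (x + s *\<^sub>R ei)" for s
  have d\<phi>: "DERIV \<phi> s :> pd i F (x + s *\<^sub>R ei + h *\<^sub>R ej) - pd i F (x + s *\<^sub>R ei)" if "0 \<le> s" "s \<le> h" for s
  proof -
    have a: "((\<lambda>t. F ((x + h *\<^sub>R ej) + t *\<^sub>R ei)) has_real_derivative pd i F ((x + h *\<^sub>R ej) + s *\<^sub>R ei)) (at s)"
      unfolding ei_def by (rule lined_shift, rule l1)
        (use inU[of s h] that h in \<open>simp add: ei_def ej_def algebra_simps\<close>)
    have b: "((\<lambda>t. F (x + t *\<^sub>R ei)) has_real_derivative pd i F (x + s *\<^sub>R ei)) (at s)"
      unfolding ei_def by (rule lined_shift, rule l1)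
        (use inU[of s 0] that h in \<open>simp add: ei_def ej_def algebra_simps\<close>)
    have "DERIV (\<lambda>t. F ((x + h *\<^sub>R ej) + t *\<^sub>R ei) - F (x + t *\<^sub>R ei)) s :>
            pd i F ((x + h *\<^sub>R ej) + s *\<^sub>R ei) - pd i F (x + s *\<^sub>R ei)"
      by (rule DERIV_diff[OF a b])
    moreover have "\<And>t. (x + h *\<^sub>R ej) + t *\<^sub>R ei = x + t *\<^sub>R ei + h *\<^sub>R ej" by (simp add: algebra_simps)
    ultimately show ?thesis unfolding \<phi>_def by simp
  qed
  obtain \<xi> where \<xi>: "0 < \<xi>" "\<xi> < h" "\<phi> h - \<phi> 0 = (h - 0) * (pd i F (x + \<xi> *\<^sub>R ei + h *\<^sub>R ej) - pd i F (x + \<xi> *\<^sub>R ei))"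
    using MVT2[OF h(1), of \<phi> "\<lambda>s. pd i F (x + s *\<^sub>R ei + h *\<^sub>R ej) - pd i F (x + s *\<^sub>R ei)"] d\<phi> by auto
  define \<psi> where "\<psi> t = pd i F (x + \<xi> *\<^sub>R ei + t *\<^sub>R ej)" for t
  have d\<psi>: "DERIV \<psi> t :> pd j (pd i F) (x + \<xi> *\<^sub>R ei + t *\<^sub>R ej)" if "0 \<le> t" "t \<le> h" for t
    unfolding \<psi>_def ej_def by (rule lined_shift, rule l2)
        (use inU[of \<xi> t] that \<xi> in \<open>simp add: ei_def ej_def algebra_simps\<close>)
  obtain \<eta> where \<eta>: "0 < \<eta>" "\<eta> < h" "\<psi> h - \<psi> 0 = (h - 0) * pd j (pd i F) (x + \<xi> *\<^sub>R ei + \<eta> *\<^sub>R ej)"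
    using MVT2[OF h(1), of \<psi> "\<lambda>t. pd j (pd i F) (x + \<xi> *\<^sub>R ei + t *\<^sub>R ej)"] d\<psi> by auto
  have "F (x + h *\<^sub>R ei + h *\<^sub>R ej) - F (x + h *\<^sub>R ei) - F (x + h *\<^sub>R ej) + F x = \<phi> h - \<phi> 0"
    unfolding \<phi>_def by simp
  also have "\<dots> = h * (\<psi> h - \<psi> 0)" using \<xi>(3) unfolding \<psi>_def by simp
  also have "\<dots> = h * h * pd j (pd i F) (x + \<xi> *\<^sub>R ei + \<eta> *\<^sub>R ej)" using \<eta>(3) by simp
  finally show ?thesis using \<xi> \<eta> unfolding ei_def ej_def by blast
qed

lemma schwarz12:
  fixes F :: "real^2 \<Rightarrow> real"
  assumes U: "open U" and S: "smooth_on U F" and x: "x \<in> U"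
  shows "pd 2 (pd 1 F) x = pd 1 (pd 2 F) x"
proof (rule ccontr)
  assume ne: "pd 2 (pd 1 F) x \<noteq> pd 1 (pd 2 F) x"
  define c1 where "c1 = pd 2 (pd 1 F) x"
  define c2 where "c2 = pd 1 (pd 2 F) x"
  define e where "e = \<bar>c1 - c2\<bar> / 2"
  have e: "e > 0" using ne by (simp add: e_def c1_def c2_def)
  obtain r where r: "r > 0" "ball x r \<subseteq> U" using U x open_contains_ball by blast
  have c1c: "isCont (pd 2 (pd 1 F)) x"
    using smooth_sq[OF smooth_pd[OF smooth_pd[OF S]]] U x continuous_on_eq_continuous_at
    unfolding sq_def by blast
  have c2c: "isCont (pd 1 (pd 2 F)) x"
    using smooth_sq[OF smooth_pd[OF smooth_pd[OF S]]] U x continuous_on_eq_continuous_at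
    unfolding sq_def by blast
  obtain d1 where d1: "d1 > 0" "\<And>y. dist y x < d1 \<Longrightarrow> dist (pd 2 (pd 1 F) y) c1 < e"
    using c1c e unfolding continuous_at_eps_delta c1_def by blast
  obtain d2 where d2: "d2 > 0" "\<And>y. dist y x < d2 \<Longrightarrow> dist (pd 1 (pd 2 F) y) c2 < e"
    using c2c e unfolding continuous_at_eps_delta c2_def by blast
  define h where "h = min r (min d1 d2) / 4"
  have h: "0 < h" "2 * h < r" "2 * h < d1" "2 * h < d2" using r d1 d2 by (auto simp: h_def)
  obtain a b where ab: "0<a" "a<h" "0<b" "b<h"
    "F (x + h *\<^sub>R axis 1 1 + h *\<^sub>R axis 2 1) - F (x + h *\<^sub>R axis 1 1) - F (x + h *\<^sub>R axis 2 1) + F x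
     = h * h * pd 2 (pd 1 F) (x + a *\<^sub>R axis 1 1 + b *\<^sub>R axis 2 1)"
    using delta_lemma[OF S r(2) h(1,2), of 1 2] by blast
  obtain a' b' where ab': "0<a'" "a'<h" "0<b'" "b'<h"
    "F (x + h *\<^sub>R axis 2 1 + h *\<^sub>R axis 1 1) - F (x + h *\<^sub>R axis 2 1) - F (x + h *\<^sub>R axis 1 1) + F x
     = h * h * pd 1 (pd 2 F) (x + a' *\<^sub>R axis 2 1 + b' *\<^sub>R axis 1 1)"
    using delta_lemma[OF S r(2) h(1,2), of 2 1] by blast
  have eq: "pd 2 (pd 1 F) (x + a *\<^sub>R axis 1 1 + b *\<^sub>R axis 2 1) = pd 1 (pd 2 F) (x + a' *\<^sub>R axis 2 1 + b' *\<^sub>R axis 1 1)"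
  proof -
    have "h * h * pd 2 (pd 1 F) (x + a *\<^sub>R axis 1 1 + b *\<^sub>R axis 2 1) = h * h * pd 1 (pd 2 F) (x + a' *\<^sub>R axis 2 1 + b' *\<^sub>R axis 1 1)"
      using ab(5) ab'(5) by (simp add: algebra_simps)
    then show ?thesis using h(1) by simp
  qed
  have nb: "dist (x + p *\<^sub>R axis i 1 + q *\<^sub>R axis j 1) x < 2 * h" if "0<p" "p<h" "0<q" "q<h" for p q and i j :: 2
  proof -
    have "norm (p *\<^sub>R axis i (1::real) + q *\<^sub>R axis j 1) \<le> norm (p *\<^sub>R axis i (1::real)) + norm (q *\<^sub>R axis j (1::real))"
      by (rule norm_triangle_ineq)
    also have "\<dots> = p + q" using that by simp
    moreover have "dist (x + p *\<^sub>R axis i 1 + q *\<^sub>R axis j 1) x = norm (p *\<^sub>R axis i (1::real) + q *\<^sub>R axis j 1)"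
      using dist_add_self[of x "p *\<^sub>R axis i (1::real) + q *\<^sub>R axis j 1"] by (simp add: add.assoc dist_commute)
    ultimately show ?thesis using that by simp
  qed
  have "dist (pd 2 (pd 1 F) (x + a *\<^sub>R axis 1 1 + b *\<^sub>R axis 2 1)) c1 < e"
    using d1(2) nb[OF ab(1-4), of 1 2] h(3) by simp
  moreover have "dist (pd 1 (pd 2 F) (x + a' *\<^sub>R axis 2 1 + b' *\<^sub>R axis 1 1)) c2 < e"
    using d2(2) nb[OF ab'(1-4), of 2 1] h(4) by simp
  ultimately have "\<bar>c1 - c2\<bar> < 2 * e" using eq by (simp add: dist_real_def)
  then show False by (simp add: e_def)
qed

lemma schwarz:
  fixes F :: "real^2 \<Rightarrow> real"
  assumes U: "open U" and S: "smooth_on U F" and x: "x \<in> U"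
  shows "pd i (pd j F) x = pd j (pd i F) x"
  using schwarz12[OF assms] exhaust_2[of i] exhaust_2[of j] by auto

section \<open>Coordinate curvature of a metric in dimension 2\<close>

lemma lined_add_r:
  fixes F G :: "real^2 \<Rightarrow> real"
  shows "lined i F x a \<Longrightarrow> lined i G x b \<Longrightarrow> lined i (\<lambda>y. F y + G y) x (a + b)"
  unfolding lined_real by (rule DERIV_add)

lemma lined_diff_r:
  fixes F G :: "real^2 \<Rightarrow> real"
  shows "lined i F x a \<Longrightarrow> lined i G x b \<Longrightarrow> lined i (\<lambda>y. F y - G y) x (a - b)"
  unfolding lined_real by (rule DERIV_diff)

lemma lined_mult_r:
  fixes F G :: "real^2 \<Rightarrow> real"
  assumes "lined i F x a" "lined i G x b"
  shows "lined i (\<lambda>y. F y * G y) x (a * G x + F x * b)"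
proof -
  have "((\<lambda>t. F (x + t *\<^sub>R axis i 1) * G (x + t *\<^sub>R axis i 1)) has_real_derivative
          a * G (x + 0 *\<^sub>R axis i 1) + b * F (x + 0 *\<^sub>R axis i 1)) (at 0)"
    using assms unfolding lined_real by (rule DERIV_mult)
  then show ?thesis unfolding lined_real by (simp add: mult.commute)
qed

lemma lined_cmult_r:
  fixes F :: "real^2 \<Rightarrow> real"
  shows "lined i F x a \<Longrightarrow> lined i (\<lambda>y. c * F y) x (c * a)"
  unfolding lined_real by (rule DERIV_cmult)

definition christ :: "(real^2 \<Rightarrow> real^2^2) \<Rightarrow> real^2 \<Rightarrow> 2 \<Rightarrow> 2 \<Rightarrow> 2 \<Rightarrow> real" where
  "christ M p a b c = (1/2) * (\<Sum>d\<in>UNIV. matrix_inv (M p) $ c $ d *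
      (pd a (\<lambda>q. M q $ b $ d) p + pd b (\<lambda>q. M q $ a $ d) p - pd d (\<lambda>q. M q $ a $ b) p))"

definition curv :: "(real^2 \<Rightarrow> real^2^2) \<Rightarrow> real^2 \<Rightarrow> 2 \<Rightarrow> 2 \<Rightarrow> 2 \<Rightarrow> 2 \<Rightarrow> real" where
  "curv M p i j k c =
     pd i (\<lambda>q. christ M q j k c) p - pd j (\<lambda>q. christ M q i k c) p
     + (\<Sum>e\<in>UNIV. christ M p j k e * christ M p i e c - christ M p i k e * christ M p j e c)"

lemma moeb_christ_eq: "moeb_christ f = christ (moeb_metric f)"
  by (simp add: fun_eq_iff moeb_christ_def christ_def)

lemma moeb_curv_eq: "moeb_curv f = curv (moeb_metric f)"
  by (simp add: fun_eq_iff moeb_curv_def curv_def moeb_christ_eq)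

lemma curv_quadratic_alg:
  fixes L :: "2 \<Rightarrow> 2 \<Rightarrow> 2 \<Rightarrow> real" and hi :: "2 \<Rightarrow> 2 \<Rightarrow> real" and \<Gamma> :: "2 \<Rightarrow> 2 \<Rightarrow> 2 \<Rightarrow> real"
  assumes G: "\<And>a b c. \<Gamma> a b c = hi c 1 * L a b 1 + hi c 2 * L a b 2" and h: "hi 1 2 = hi 2 1"
  shows "(- (\<Sum>c\<in>UNIV. \<Gamma> j k c * L i l c) + (\<Sum>c\<in>UNIV. \<Gamma> i k c * L j l c))
       + (- (\<Sum>c\<in>UNIV. \<Gamma> j l c * L i k c) + (\<Sum>c\<in>UNIV. \<Gamma> i l c * L j k c)) = 0"
  by (simp add: sum_2 G h algebra_simps)

lemma curv_deriv_alg: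
  fixes P :: "2 \<Rightarrow> 2 \<Rightarrow> 2 \<Rightarrow> 2 \<Rightarrow> real" and DL :: "2 \<Rightarrow> 2 \<Rightarrow> 2 \<Rightarrow> 2 \<Rightarrow> real"
  assumes D: "\<And>i a b d. DL i a b d = 1/2 * (P i a b d + P i b a d - P i d a b)"
    and S: "\<And>i a b d. P i a b d = P i a d b" and X: "\<And>i j b d. P i j b d = P j i b d"
  shows "(DL i j k l - DL j i k l) + (DL i j l k - DL j i l k) = 0"
proof -
  have "P i j l k = P i j k l" "P j i l k = P i j k l" "P j i k l = P i j k l"
    using S X by metis+
  then show ?thesis unfolding D by (simp add: algebra_simps)
qed

lemma curv_antisym:
  fixes M :: "real^2 \<Rightarrow> real^2^2"
  assumes U: "open U" and p: "p \<in> U"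
    and sym: "\<And>q a b. M q $ a $ b = M q $ b $ a"
    and det: "\<And>q. q \<in> U \<Longrightarrow> det (M q) \<noteq> 0"
    and dG: "\<And>a b c i. lined i (\<lambda>q. christ M q a b c) p (pd i (\<lambda>q. christ M q a b c) p)"
    and dM: "\<And>a b i. lined i (\<lambda>q. M q $ a $ b) p (pd i (\<lambda>q. M q $ a $ b) p)"
    and ddM: "\<And>a b c i. lined i (pd c (\<lambda>q. M q $ a $ b)) p (pd i (pd c (\<lambda>q. M q $ a $ b)) p)"
    and sch: "\<And>a b i j. pd i (pd j (\<lambda>q. M q $ a $ b)) p = pd j (pd i (\<lambda>q. M q $ a $ b)) p"
  shows "(\<Sum>c\<in>UNIV. curv M p i j k c * M p $ c $ l) + (\<Sum>c\<in>UNIV. curv M p i j l c * M p $ c $ k) = 0"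
proof -
  define Gl where "Gl q a b d = (1/2) * (pd a (\<lambda>q. M q $ b $ d) q + pd b (\<lambda>q. M q $ a $ d) q
      - pd d (\<lambda>q. M q $ a $ b) q)" for q a b d
  have symf: "(\<lambda>q. M q $ a $ b) = (\<lambda>q. M q $ b $ a)" for a b using sym by auto
  have I: "(\<Sum>c\<in>UNIV. matrix_inv (M q) $ c $ d * M q $ c $ l) = (if d = l then 1 else 0)" if q: "q \<in> U" for q d l
  proof -
    have "M q ** matrix_inv (M q) = mat 1" using inv2_all[OF det[OF q]] by blast
    then have "(M q ** matrix_inv (M q)) $ l $ d = mat 1 $ l $ d" by simp
    then show ?thesis by (simp add: matrix_matrix_mult_def mat_def sym[of q l] mult.commute eq_commute)
  qed
  have Gd: "christ M q a b c = (\<Sum>d\<in>UNIV. matrix_inv (M q) $ c $ d * Gl q a b d)" for q a b c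
    unfolding christ_def Gl_def by (simp add: sum_distrib_left algebra_simps)
  have F1: "(\<Sum>c\<in>UNIV. christ M q a b c * M q $ c $ l) = Gl q a b l" if q: "q \<in> U" for q a b l
  proof -
    have "(\<Sum>c\<in>UNIV. christ M q a b c * M q $ c $ l)
        = (\<Sum>c\<in>UNIV. \<Sum>d\<in>UNIV. Gl q a b d * (matrix_inv (M q) $ c $ d * M q $ c $ l))"
      unfolding Gd by (simp add: sum_distrib_right sum_distrib_left algebra_simps)
    also have "\<dots> = (\<Sum>d\<in>UNIV. \<Sum>c\<in>UNIV. Gl q a b d * (matrix_inv (M q) $ c $ d * M q $ c $ l))"
      by (rule sum.swap)
    also have "\<dots> = (\<Sum>d\<in>UNIV. Gl q a b d * (if d = l then 1 else 0))"
      by (simp add: sum_distrib_left[symmetric] I[OF q])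
    also have "\<dots> = Gl q a b l" by (simp add: if_distrib cong: if_cong)
    finally show ?thesis .
  qed
  have F4: "pd i (\<lambda>q. M q $ c $ l) p = Gl p i c l + Gl p i l c" for i c l
    unfolding Gl_def using symf[of l c] symf[of i c] symf[of i l] by (simp add: algebra_simps)
  have F2: "pd i (\<lambda>q. \<Sum>c\<in>UNIV. christ M q j k c * M q $ c $ l) p =
      (\<Sum>c\<in>UNIV. pd i (\<lambda>q. christ M q j k c) p * M p $ c $ l + christ M p j k c * pd i (\<lambda>q. M q $ c $ l) p)"
    for i j k l
  proof -
    have "lined i (\<lambda>q. christ M q j k 1 * M q $ 1 $ l + christ M q j k 2 * M q $ 2 $ l) p
      ((pd i (\<lambda>q. christ M q j k 1) p * M p $ 1 $ l + christ M p j k 1 * pd i (\<lambda>q. M q $ 1 $ l) p)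
      + (pd i (\<lambda>q. christ M q j k 2) p * M p $ 2 $ l + christ M p j k 2 * pd i (\<lambda>q. M q $ 2 $ l) p))"
      by (intro lined_add_r lined_mult_r dG dM)
    then show ?thesis by (simp add: sum_2 lined_pd)
  qed
  have F3: "pd i (\<lambda>q. Gl q j k l) p = 1/2 * (pd i (pd j (\<lambda>q. M q $ k $ l)) p + pd i (pd k (\<lambda>q. M q $ j $ l)) p
      - pd i (pd l (\<lambda>q. M q $ j $ k)) p)" for i j k l
  proof -
    have "lined i (\<lambda>q. Gl q j k l) p (1/2 * (pd i (pd j (\<lambda>q. M q $ k $ l)) p + pd i (pd k (\<lambda>q. M q $ j $ l)) p
      - pd i (pd l (\<lambda>q. M q $ j $ k)) p))"
      unfolding Gl_def by (intro lined_cmult_r lined_add_r lined_diff_r ddM)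
    then show ?thesis by (rule lined_pd)
  qed
  have F1': "pd i (\<lambda>q. \<Sum>c\<in>UNIV. christ M q j k c * M q $ c $ l) p = pd i (\<lambda>q. Gl q j k l) p" for i j k l
    by (rule pd_cong[OF U p]) (rule F1)
  define DL where "DL i a b d = pd i (\<lambda>q. Gl q a b d) p" for i a b d
  define P where "P i a b d = pd i (pd a (\<lambda>q. M q $ b $ d)) p" for i a b d
  define L where "L a b d = Gl p a b d" for a b d
  define hi where "hi c d = matrix_inv (M p) $ c $ d" for c d
  define \<Gamma> where "\<Gamma> a b c = christ M p a b c" for a b c
  define d\<Gamma> where "d\<Gamma> i a b c = pd i (\<lambda>q. christ M q a b c) p" for i a b c
  have R: "(\<Sum>c\<in>UNIV. curv M p i j k l' * 0) = 0" for i j k l' by simp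
  have key: "(\<Sum>c\<in>UNIV. curv M p i j k c * M p $ c $ l) =
     DL i j k l - DL j i k l - (\<Sum>c\<in>UNIV. \<Gamma> j k c * L i l c) + (\<Sum>c\<in>UNIV. \<Gamma> i k c * L j l c)" for i j k l
  proof -
    have A: "(\<Sum>c\<in>UNIV. d\<Gamma> i j k c * M p $ c $ l) = DL i j k l - (\<Sum>c\<in>UNIV. \<Gamma> j k c * (L i c l + L i l c))" for i j k l
      using F2[of i j k l] F1'[of i j k l] F4 unfolding DL_def d\<Gamma>_def \<Gamma>_def L_def
      by (simp add: sum.distrib algebra_simps)
    have B: "(\<Sum>c\<in>UNIV. \<Gamma> i e c * M p $ c $ l) = L i e l" for i e l
      using F1[OF p] unfolding \<Gamma>_def L_def by simp
    have "(\<Sum>c\<in>UNIV. curv M p i j k c * M p $ c $ l)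
      = (\<Sum>c\<in>UNIV. d\<Gamma> i j k c * M p $ c $ l) - (\<Sum>c\<in>UNIV. d\<Gamma> j i k c * M p $ c $ l)
        + (\<Sum>e\<in>UNIV. \<Gamma> j k e * (\<Sum>c\<in>UNIV. \<Gamma> i e c * M p $ c $ l))
        - (\<Sum>e\<in>UNIV. \<Gamma> i k e * (\<Sum>c\<in>UNIV. \<Gamma> j e c * M p $ c $ l))"
      unfolding curv_def d\<Gamma>_def \<Gamma>_def by (simp add: sum_2 algebra_simps)
    also have "\<dots> = DL i j k l - DL j i k l - (\<Sum>c\<in>UNIV. \<Gamma> j k c * L i l c) + (\<Sum>c\<in>UNIV. \<Gamma> i k c * L j l c)"
      unfolding A B by (simp add: sum_2 algebra_simps)
    finally show ?thesis .
  qed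
  have q: "(- (\<Sum>c\<in>UNIV. \<Gamma> j k c * L i l c) + (\<Sum>c\<in>UNIV. \<Gamma> i k c * L j l c))
       + (- (\<Sum>c\<in>UNIV. \<Gamma> j l c * L i k c) + (\<Sum>c\<in>UNIV. \<Gamma> i l c * L j k c)) = 0"
  proof (rule curv_quadratic_alg)
    show "\<Gamma> a b c = hi c 1 * L a b 1 + hi c 2 * L a b 2" for a b c
      unfolding \<Gamma>_def hi_def L_def Gd by (simp add: sum_2)
    show "hi 1 2 = hi 2 1" unfolding hi_def using inv2_entries[OF det[OF p]] sym by simp
  qed
  have d: "(DL i j k l - DL j i k l) + (DL i j l k - DL j i l k) = 0"
  proof (rule curv_deriv_alg)
    show "DL i a b d = 1/2 * (P i a b d + P i b a d - P i d a b)" for i a b d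
      unfolding DL_def P_def F3 ..
    show "P i a b d = P i a d b" for i a b d unfolding P_def using symf[of b d] by simp
    show "P i j b d = P j i b d" for i j b d unfolding P_def by (rule sch)
  qed
  show ?thesis unfolding key using q d by linarith
qed

lemma genR_det:
  assumes "open U" "\<And>a b. genR U (\<lambda>q. M q $ a $ b)"
  shows "genR U (\<lambda>q. det (M q :: real^2^2))"
proof -
  have "genR U (\<lambda>q. M q $ 1 $ 1 * M q $ 2 $ 2 - M q $ 1 $ 2 * M q $ 2 $ 1)"
    using assms by (intro genR_diff gmult) auto
  then show ?thesis by (simp add: det_2)
qed

lemma genR_matrix_inv:
  assumes U: "open U" and M: "\<And>a b. genR U (\<lambda>q. M q $ a $ b)" and d: "\<And>q. q \<in> U \<Longrightarrow> det (M q :: real^2^2) \<noteq> 0"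
  shows "genR U (\<lambda>q. matrix_inv (M q) $ a $ b)"
proof -
  have D: "genR U (\<lambda>q. det (M q))" by (rule genR_det[OF U M])
  have "genR U (\<lambda>q. (if a = 1 \<and> b = 1 then M q $ 2 $ 2 else if a = 1 \<and> b = 2 then - M q $ 1 $ 2
                   else if a = 2 \<and> b = 1 then - M q $ 2 $ 1 else M q $ 1 $ 1) / det (M q))"
    using exhaust_2[of a] exhaust_2[of b] genR_neg[OF M U] M D d
    by (auto intro!: genR_divide)
  then show ?thesis
  proof (rule gcong, intro ballI)
    fix q assume q: "q \<in> U"
    show "(if a = 1 \<and> b = 1 then M q $ 2 $ 2 else if a = 1 \<and> b = 2 then - M q $ 1 $ 2
                   else if a = 2 \<and> b = 1 then - M q $ 2 $ 1 else M q $ 1 $ 1) / det (M q) = matrix_inv (M q) $ a $ b"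
      using exhaust_2[of a] exhaust_2[of b] inv2_entries[OF d[OF q]] by auto
  qed
qed


lemma alg_r:
  fixes a b d r11 r12 r21 r22 s :: real
  assumes S11: "r11 * a + r12 * b = 0" and S22: "r21 * b + r22 * d = 0"
    and S12: "r11 * b + r12 * d + (r21 * a + r22 * b) = 0" and s: "s = r21 * a + r22 * b"
  shows "r11 * (a * d - b * b) = b * s" "r12 * (a * d - b * b) = -a * s" "r21 * (a * d - b * b) = d * s" "r22 * (a * d - b * b) = -b * s"
proof -
  have t: "r11 * b + r12 * d = -s" using S12 s by linarith
  have "r11 * (a * d - b * b) = d * (r11 * a + r12 * b) - b * (r11 * b + r12 * d)" by (simp add: algebra_simps)
  then show "r11 * (a * d - b * b) = b * s" using S11 t by simp
  have "r12 * (a * d - b * b) = a * (r11 * b + r12 * d) - b * (r11 * a + r12 * b)" by (simp add: algebra_simps)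
  then show "r12 * (a * d - b * b) = -a * s" using S11 t by simp
  have "r21 * (a * d - b * b) = d * (r21 * a + r22 * b) - b * (r21 * b + r22 * d)" by (simp add: algebra_simps)
  then show "r21 * (a * d - b * b) = d * s" using S22 s by simp
  have "r22 * (a * d - b * b) = a * (r21 * b + r22 * d) - b * (r21 * a + r22 * b)" by (simp add: algebra_simps)
  then show "r22 * (a * d - b * b) = -b * s" using S22 s by simp
qed

lemma alg1s:
  fixes a b d r11 r12 r21 r22 :: real
  assumes D: "a * d - b * b \<noteq> 0" and S11: "r11 * a + r12 * b = 0" and S22: "r21 * b + r22 * d = 0"
    and S12: "r11 * b + r12 * d + (r21 * a + r22 * b) = 0" and s: "r21 * a + r22 * b = 0"
  shows "r11 = 0 \<and> r12 = 0 \<and> r21 = 0 \<and> r22 = 0"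
proof -
  note r = alg_r[OF S11 S22 S12 refl]
  have "r11 * (a * d - b * b) = 0" "r12 * (a * d - b * b) = 0" "r21 * (a * d - b * b) = 0" "r22 * (a * d - b * b) = 0"
    using r unfolding s by simp_all
  then show ?thesis using D by simp
qed

lemma alg2s:
  fixes a b d r11 r12 r21 r22 x11 x12 x22 :: real
  assumes a: "a > 0" and D: "a * d - b * b > 0" and S11: "r11 * a + r12 * b = 0" and S22: "r21 * b + r22 * d = 0"
    and S12: "r11 * b + r12 * d + (r21 * a + r22 * b) = 0" and s: "r21 * a + r22 * b \<noteq> 0"
    and E11: "r11 * x11 + r12 * x12 = 0" and E22: "r21 * x12 + r22 * x22 = 0"
    and E12: "r11 * x12 + r12 * x22 + r21 * x11 + r22 * x12 = 0"
    and tr: "d * x11 - 2 * b * x12 + a * x22 = 0"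
  shows "x11 = 0 \<and> x12 = 0 \<and> x22 = 0"
proof -
  define s where "s = r21 * a + r22 * b"
  define D where "D = a * d - b * b"
  note r = alg_r[OF S11 S22 S12 s_def, folded D_def]
  have sn: "s \<noteq> 0" using s s_def by simp
  have "s * (b * x11 - a * x12) = (r11 * D) * x11 + (r12 * D) * x12" using r by (simp add: algebra_simps)
  also have "\<dots> = D * (r11 * x11 + r12 * x12)" by (simp add: algebra_simps)
  finally have "s * (b * x11 - a * x12) = 0" using E11 by simp
  then have e1: "b * x11 = a * x12" using sn by simp
  have "s * (d * x11 - a * x22) = (r11 * D) * x12 + (r12 * D) * x22 + (r21 * D) * x11 + (r22 * D) * x12"
    using r by (simp add: algebra_simps)
  also have "\<dots> = D * (r11 * x12 + r12 * x22 + r21 * x11 + r22 * x12)" by (simp add: algebra_simps)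
  finally have "s * (d * x11 - a * x22) = 0" using E12 by simp
  then have e3: "d * x11 = a * x22" using sn by simp
  have e4: "d * x11 = b * x12" using tr e3 by linarith
  have "a * d * x11 = b * b * x11"
  proof -
    have "a * d * x11 = a * (b * x12)" using e4 by (simp add: mult.assoc)
    also have "\<dots> = b * (a * x12)" by simp
    also have "\<dots> = b * (b * x11)" using e1 by simp
    finally show ?thesis by simp
  qed
  then have "D * x11 = 0" unfolding D_def by (simp add: algebra_simps)
  then have x11: "x11 = 0" using D D_def by simp
  then have x12: "x12 = 0" using e1 a by simp
  have "x22 = 0" using e3 x11 a by simp
  then show ?thesis using x11 x12 by simp
qed

context
  fixes U :: "(real^2) set" and f :: "real^2 \<Rightarrow> 'e::euclidean_space"
  assumes imm: "immersion_on U f"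
begin

lemma U_open: "open U" using imm unfolding immersion_on_def by blast
lemma f_smooth: "smooth_on U f" using imm unfolding immersion_on_def by blast
lemma df_inj: "p \<in> U \<Longrightarrow> (\<Sum>a\<in>UNIV. v $ a *\<^sub>R pd a f p) = 0 \<Longrightarrow> v = 0"
proof -
  assume p: "p \<in> U" and z: "(\<Sum>a\<in>UNIV. v $ a *\<^sub>R pd a f p) = 0"
  have "inj (\<lambda>v::real^2. \<Sum>a\<in>UNIV. v $ a *\<^sub>R pd a f p)" using imm p unfolding immersion_on_def by blast
  moreover have "(\<Sum>a\<in>UNIV. (0::real^2) $ a *\<^sub>R pd a f p) = 0" by simp
  ultimately show "v = 0" using z unfolding inj_def by auto
qed

lemma smooth_pdf: "smooth_on U (pd a f)" using smooth_pd[OF f_smooth] .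
lemma smooth_pdpdf: "smooth_on U (pd a (pd b f))" using smooth_pd[OF smooth_pdf] .

lemma gmat_sym: "gmat f q $ a $ b = gmat f q $ b $ a"
  unfolding gmat_def by (simp add: inner_commute)

lemma genR_gmat: "genR U (\<lambda>q. gmat f q $ a $ b)"
  unfolding gmat_def by (simp add: genR_inner[OF U_open smooth_pdf smooth_pdf])

lemma gmat_pos:
  assumes p: "p \<in> U"
  shows "det (gmat f p) > 0" "gmat f p $ 1 $ 1 > 0" "gmat f p $ 2 $ 2 > 0"
proof -
  define u where "u = pd 1 f p"
  define v where "v = pd 2 f p"
  have comb: "(\<Sum>a\<in>UNIV. (vector [s, t] :: real^2) $ a *\<^sub>R pd a f p) = s *\<^sub>R u + t *\<^sub>R v" for s t
    by (simp add: sum_2 u_def v_def)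
  have nz: "s *\<^sub>R u + t *\<^sub>R v \<noteq> 0" if "s \<noteq> 0 \<or> t \<noteq> 0" for s t
  proof
    assume "s *\<^sub>R u + t *\<^sub>R v = 0"
    then have "(vector [s, t] :: real^2) = 0" using df_inj[OF p] comb by metis
    then have "(vector [s, t] :: real^2) $ 1 = 0" "(vector [s, t] :: real^2) $ 2 = 0" by simp_all
    then show False using that by simp
  qed
  have u: "u \<noteq> 0" using nz[of 1 0] by simp
  have v: "v \<noteq> 0" using nz[of 0 1] by simp
  have g11: "gmat f p $ 1 $ 1 = inner u u" and g22: "gmat f p $ 2 $ 2 = inner v v"
    and g12: "gmat f p $ 1 $ 2 = inner u v" and g21: "gmat f p $ 2 $ 1 = inner u v"
    by (simp_all add: gmat_def u_def v_def inner_commute)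
  show "gmat f p $ 1 $ 1 > 0" "gmat f p $ 2 $ 2 > 0" using u v g11 g22 by auto
  define c where "c = inner u v / inner v v"
  have vv: "inner v v > 0" using v by simp
  have w: "u - c *\<^sub>R v \<noteq> 0" using nz[of 1 "-c"] by simp
  have "inner (u - c *\<^sub>R v) (u - c *\<^sub>R v) > 0" using w by simp
  moreover have e: "inner (u - c *\<^sub>R v) (u - c *\<^sub>R v) = inner u u - 2 * c * inner u v + c * c * inner v v"
    by (simp add: inner_diff_left inner_diff_right inner_commute algebra_simps)
  moreover have "(inner u u - 2 * c * inner u v + c * c * inner v v) * inner v v = inner u u * inner v v - inner u v * inner u v"
    using vv unfolding c_def by (simp add: divide_simps; simp add: algebra_simps power2_eq_square)
  moreover have "det (gmat f p) = inner u u * inner v v - inner u v * inner u v"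
    by (simp add: det_2 g11 g22 g12 g21)
  ultimately show "det (gmat f p) > 0" using vv mult_pos_pos by metis
qed


lemma genR_ginv: "genR U (\<lambda>q. ginv f q $ a $ b)"
  unfolding ginv_def
  by (rule genR_matrix_inv[OF U_open genR_gmat]) (use gmat_pos(1) in \<open>simp add: less_imp_neq[symmetric]\<close>)

lemma ginv_props:
  assumes q: "q \<in> U"
  shows "gmat f q ** ginv f q = mat 1" "ginv f q ** gmat f q = mat 1"
    "ginv f q $ a $ b = ginv f q $ b $ a"
proof -
  have d: "det (gmat f q) \<noteq> 0" using gmat_pos(1)[OF q] by simp
  show "gmat f q ** ginv f q = mat 1" "ginv f q ** gmat f q = mat 1"
    using inv2_all[OF d] unfolding ginv_def by blast+
  show "ginv f q $ a $ b = ginv f q $ b $ a"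
    unfolding ginv_def using inv2_entries[OF d] gmat_sym[of q 1 2] exhaust_2[of a] exhaust_2[of b] by auto
qed

lemma ginv_gmat:
  assumes q: "q \<in> U"
  shows "(\<Sum>a\<in>UNIV. ginv f q $ a $ b * gmat f q $ a $ c) = (if b = c then 1 else 0)"
proof -
  have "(ginv f q ** gmat f q) $ b $ c = mat 1 $ b $ c" using ginv_props(2)[OF q] by simp
  then show ?thesis using ginv_props(3)[OF q] by (simp add: matrix_matrix_mult_def mat_def)
qed

lemma gmat_ginv:
  assumes q: "q \<in> U"
  shows "(\<Sum>a\<in>UNIV. gmat f q $ c $ a * ginv f q $ a $ b) = (if c = b then 1 else 0)"
proof -
  have "(gmat f q ** ginv f q) $ c $ b = mat 1 $ c $ b" using ginv_props(1)[OF q] by simp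
  then show ?thesis by (simp add: matrix_matrix_mult_def mat_def)
qed

lemma nproj_normal:
  assumes q: "q \<in> U"
  shows "inner (nproj f q v) (pd c f q) = 0"
proof -
  have "inner (tproj f q v) (pd c f q) = (\<Sum>a\<in>UNIV. \<Sum>b\<in>UNIV. inner v (pd b f q) * (ginv f q $ a $ b * gmat f q $ a $ c))"
    unfolding tproj_def gmat_def by (simp add: inner_sum_left algebra_simps)
  also have "\<dots> = (\<Sum>b\<in>UNIV. \<Sum>a\<in>UNIV. inner v (pd b f q) * (ginv f q $ a $ b * gmat f q $ a $ c))"
    by (rule sum.swap)
  also have "\<dots> = (\<Sum>b\<in>UNIV. inner v (pd b f q) * (if b = c then 1 else 0))"
    by (simp add: sum_distrib_left[symmetric] ginv_gmat[OF q])
  also have "\<dots> = inner v (pd c f q)" by (simp add: if_distrib cong: if_cong)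
  finally show ?thesis unfolding nproj_def by (simp add: inner_diff_left)
qed

lemma sff_normal: "q \<in> U \<Longrightarrow> inner (sff f q a b) (pd c f q) = 0"
  unfolding sff_def by (rule nproj_normal)

lemma H_normal: "q \<in> U \<Longrightarrow> inner (meancurv f q) (pd c f q) = 0"
  unfolding meancurv_def by (simp add: inner_sum_left sff_normal)

lemma pdpdf_sym:
  assumes q: "q \<in> U"
  shows "pd a (pd b f) q = pd b (pd a f) q"
proof (rule euclidean_eqI)
  fix w :: 'e assume "w \<in> Basis"
  have sw: "smooth_on U (\<lambda>x. inner (f x) w)"
    using smooth_linear[OF bounded_linear_inner_left U_open f_smooth] .
  have e: "inner (pd a (pd b f) q) w = pd a (pd b (\<lambda>x. inner (f x) w)) q" for a b
  proof -
    have "pd a (pd b (\<lambda>x. inner (f x) w)) q = pd a (\<lambda>x. inner (pd b f x) w) q"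
      by (rule pd_cong[OF U_open q]) (rule pd_linear[OF bounded_linear_inner_left f_smooth])
    also have "\<dots> = inner (pd a (pd b f) q) w"
      by (rule pd_linear[OF bounded_linear_inner_left smooth_pdf q])
    finally show ?thesis by simp
  qed
  show "inner (pd a (pd b f) q) w = inner (pd b (pd a f) q) w"
    unfolding e using schwarz[OF U_open sw q] by simp
qed

lemma sff_sym: "q \<in> U \<Longrightarrow> sff f q a b = sff f q b a"
  unfolding sff_def using pdpdf_sym by simp

lemma genR_sff: "genR U (\<lambda>q. inner (sff f q a b) w)"
proof -
  have "genR U (\<lambda>q. inner (pd a (pd b f) q) w - (\<Sum>a'\<in>UNIV. \<Sum>b'\<in>UNIV.
      ginv f q $ a' $ b' * inner (pd a (pd b f) q) (pd b' f q) * inner (pd a' f q) w))"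
    by (intro genR_diff genR_sum gmult genR_comp genR_inner genR_ginv smooth_pdf smooth_pdpdf U_open) simp_all
  then show ?thesis
    by (simp add: sff_def nproj_def tproj_def inner_diff_left inner_sum_left)
qed

lemma genR_H: "genR U (\<lambda>q. inner (meancurv f q) w)"
proof -
  have "genR U (\<lambda>q. (\<lambda>_. 1/2) q * (\<Sum>a\<in>UNIV. \<Sum>b\<in>UNIV. ginv f q $ a $ b * inner (sff f q a b) w))"
    by (intro gmult genR_const genR_sum genR_ginv genR_sff U_open) simp_all
  then show ?thesis
    by (simp add: meancurv_def inner_sum_left)
qed

lemma genR_inner_gen:
  assumes "\<And>w. genR U (\<lambda>q. inner (V q) w)" "\<And>w. genR U (\<lambda>q. inner (W q) w)"
  shows "genR U (\<lambda>q. inner (V q :: 'e) (W q))"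
proof -
  have "genR U (\<lambda>q. \<Sum>b\<in>Basis. inner (V q) b * inner (W q) b)"
    by (intro genR_sum gmult assms U_open finite_Basis)
  then show ?thesis by (simp add: euclidean_inner[symmetric])
qed

definition rhoarg :: "real^2 \<Rightarrow> real" where
  "rhoarg q = 2 * (sff_norm2 f q - 2 * (norm (meancurv f q))\<^sup>2)"

lemma genR_rhoarg: "genR U rhoarg"
proof -
  have ss: "genR U (\<lambda>q. inner (sff f q a b) (sff f q c d))" for a b c d
    by (rule genR_inner_gen; rule genR_sff)
  have hh: "genR U (\<lambda>q. inner (meancurv f q) (meancurv f q))"
    by (rule genR_inner_gen; rule genR_H)
  have "genR U (\<lambda>q. (\<lambda>_. 2) q * ((\<Sum>a\<in>UNIV. \<Sum>b\<in>UNIV. \<Sum>c\<in>UNIV. \<Sum>d\<in>UNIV.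
      ginv f q $ a $ c * ginv f q $ b $ d * inner (sff f q a b) (sff f q c d))
      - (\<lambda>_. 2) q * inner (meancurv f q) (meancurv f q)))"
    by (intro gmult genR_diff genR_const genR_sum genR_ginv ss hh U_open) simp_all
  then show ?thesis
    unfolding rhoarg_def sff_norm2_def power2_norm_eq_inner by simp
qed

lemma rho_eq: "rho f q = sqrt (rhoarg q)"
  unfolding rho_def rhoarg_def ..



lemma ginv_gmat2:
  assumes q: "q \<in> U"
  shows "(\<Sum>d\<in>UNIV. ginv f q $ b $ d * gmat f q $ c $ d) = (if b = c then 1 else 0)"
proof -
  have "(ginv f q ** gmat f q) $ b $ c = mat 1 $ b $ c" using ginv_props(2)[OF q] by simp
  then show ?thesis by (simp add: matrix_matrix_mult_def mat_def gmat_sym[of q _ c])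
qed

lemma trace_ginv_gmat:
  assumes q: "q \<in> U"
  shows "(\<Sum>a\<in>UNIV. \<Sum>b\<in>UNIV. ginv f q $ a $ b * gmat f q $ a $ b) = 2"
proof -
  have "(\<Sum>b\<in>UNIV. ginv f q $ a $ b * gmat f q $ a $ b) = 1" for a
    using ginv_gmat2[OF q, of a a] by simp
  then show ?thesis by (simp add: sum_2)
qed

lemma sff_umbilic_norm:
  assumes q: "q \<in> U" and u: "\<And>a b. sff f q a b = gmat f q $ a $ b *\<^sub>R meancurv f q"
  shows "sff_norm2 f q = 2 * inner (meancurv f q) (meancurv f q)"
proof -
  let ?i = "ginv f q" and ?g = "gmat f q" and ?h = "inner (meancurv f q) (meancurv f q)"
  have "sff_norm2 f q = (\<Sum>a\<in>UNIV. \<Sum>b\<in>UNIV. \<Sum>c\<in>UNIV. (?i $ a $ c * ?g $ a $ b) * (\<Sum>d\<in>UNIV. ?i $ b $ d * ?g $ c $ d)) * ?h"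
    unfolding sff_norm2_def u by (simp add: sum_distrib_left sum_distrib_right algebra_simps)
  also have "\<dots> = (\<Sum>a\<in>UNIV. \<Sum>b\<in>UNIV. \<Sum>c\<in>UNIV. (?i $ a $ c * ?g $ a $ b) * (if b = c then 1 else 0)) * ?h"
    by (simp add: ginv_gmat2[OF q])
  also have "\<dots> = (\<Sum>a\<in>UNIV. \<Sum>b\<in>UNIV. ?i $ a $ b * ?g $ a $ b) * ?h"
    by (simp add: if_distrib cong: if_cong)
  also have "\<dots> = 2 * ?h" by (simp add: trace_ginv_gmat[OF q])
  finally show ?thesis .
qed

context
  assumes umb: "umbilic_free U f"
begin

lemma rho_pos: "q \<in> U \<Longrightarrow> rho f q > 0" using umb unfolding umbilic_free_def by blast

lemma rhoarg_pos: "q \<in> U \<Longrightarrow> rhoarg q > 0" using rho_pos rho_eq by simp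

lemma genR_rho: "genR U (rho f)"
proof -
  have "genR U (\<lambda>q. sqrt (rhoarg q))" by (rule gsqrt[OF genR_rhoarg]) (use rhoarg_pos in blast)
  moreover have "rho f = (\<lambda>q. sqrt (rhoarg q))" by (rule ext) (rule rho_eq)
  ultimately show ?thesis by simp
qed

lemma genR_M: "genR U (\<lambda>q. moeb_metric f q $ a $ b)"
proof -
  have "genR U (\<lambda>q. rho f q * rho f q * gmat f q $ a $ b)"
    by (intro gmult genR_rho genR_gmat)
  then show ?thesis by (simp add: moeb_metric_def power2_eq_square)
qed

lemma M_sym: "moeb_metric f q $ a $ b = moeb_metric f q $ b $ a"
  by (simp add: moeb_metric_def gmat_sym)

lemma det_M: "det (moeb_metric f q) = (rho f q)^4 * det (gmat f q)"
  by (simp add: det_2 moeb_metric_def algebra_simps power4_eq_xxxx power2_eq_square)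

lemma det_M_pos: "q \<in> U \<Longrightarrow> det (moeb_metric f q) > 0"
  unfolding det_M by (intro mult_pos_pos zero_less_power gmat_pos(1) rho_pos)

lemma genR_Minv: "genR U (\<lambda>q. matrix_inv (moeb_metric f q) $ a $ b)"
  by (rule genR_matrix_inv[OF U_open genR_M]) (use det_M_pos in \<open>simp add: less_imp_neq[symmetric]\<close>)

lemma genR_christ: "genR U (\<lambda>q. christ (moeb_metric f) q a b c)"
proof -
  have "genR U (\<lambda>q. (\<lambda>_. 1/2) q * (\<Sum>d\<in>UNIV. matrix_inv (moeb_metric f q) $ c $ d *
      (pd a (\<lambda>q. moeb_metric f q $ b $ d) q + pd b (\<lambda>q. moeb_metric f q $ a $ d) q - pd d (\<lambda>q. moeb_metric f q $ a $ b) q)))"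
    by (intro gmult genR_const genR_sum genR_Minv gadd genR_diff genR_pd genR_M U_open) simp_all
  then show ?thesis unfolding christ_def by simp
qed

lemma curv_antisym_M:
  assumes p: "p \<in> U"
  shows "(\<Sum>c\<in>UNIV. curv (moeb_metric f) p i j k c * moeb_metric f p $ c $ l)
       + (\<Sum>c\<in>UNIV. curv (moeb_metric f) p i j l c * moeb_metric f p $ c $ k) = 0"
proof (rule curv_antisym[OF U_open p])
  show "moeb_metric f q $ a $ b = moeb_metric f q $ b $ a" for q a b by (rule M_sym)
  show "det (moeb_metric f q) \<noteq> 0" if "q \<in> U" for q using det_M_pos[OF that] by simp
  show "lined i (\<lambda>q. christ (moeb_metric f) q a b c) p (pd i (\<lambda>q. christ (moeb_metric f) q a b c) p)" for a b c i
    by (rule genR_lined[OF genR_christ U_open p])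
  show "lined i (\<lambda>q. moeb_metric f q $ a $ b) p (pd i (\<lambda>q. moeb_metric f q $ a $ b) p)" for a b i
    by (rule genR_lined[OF genR_M U_open p])
  show "lined i (pd c (\<lambda>q. moeb_metric f q $ a $ b)) p (pd i (pd c (\<lambda>q. moeb_metric f q $ a $ b)) p)" for a b c i
    by (rule genR_lined[OF genR_pd[OF genR_M U_open] U_open p])
  show "pd i (pd j (\<lambda>q. moeb_metric f q $ a $ b)) p = pd j (pd i (\<lambda>q. moeb_metric f q $ a $ b)) p" for a b i j
    by (rule schwarz[OF U_open genR_smooth[OF genR_M U_open] p])
qed

lemma genR_beta: "genR U (\<lambda>q. inner (moeb_sff f q a b) w)"
proof -
  have "genR U (\<lambda>q. rho f q * (inner (sff f q a b) w - gmat f q $ a $ b * inner (meancurv f q) w))"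
    by (intro gmult genR_diff genR_rho genR_sff genR_gmat genR_H U_open)
  then show ?thesis by (simp add: moeb_sff_def inner_diff_left)
qed

lemma smooth_beta: "smooth_on U (\<lambda>q. moeb_sff f q a b)"
  by (rule smooth_components[OF U_open genR_beta])

lemma beta_normal: "q \<in> U \<Longrightarrow> inner (moeb_sff f q a b) (pd c f q) = 0"
  by (simp add: moeb_sff_def inner_diff_left sff_normal H_normal)

lemma beta_normal_field: "normal_field U f (\<lambda>q. moeb_sff f q a b)"
  unfolding normal_field_def using smooth_beta beta_normal by blast

lemma beta_sym: "q \<in> U \<Longrightarrow> moeb_sff f q a b = moeb_sff f q b a"
  by (simp add: moeb_sff_def sff_sym gmat_sym)

lemma beta_trace:
  assumes q: "q \<in> U"
  shows "(\<Sum>a\<in>UNIV. \<Sum>b\<in>UNIV. ginv f q $ a $ b *\<^sub>R moeb_sff f q a b) = 0"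
proof -
  have "(\<Sum>a\<in>UNIV. \<Sum>b\<in>UNIV. ginv f q $ a $ b *\<^sub>R moeb_sff f q a b)
     = rho f q *\<^sub>R ((\<Sum>a\<in>UNIV. \<Sum>b\<in>UNIV. ginv f q $ a $ b *\<^sub>R sff f q a b)
        - (\<Sum>a\<in>UNIV. \<Sum>b\<in>UNIV. ginv f q $ a $ b * gmat f q $ a $ b) *\<^sub>R meancurv f q)"
    by (simp add: moeb_sff_def scaleR_diff_right scaleR_sum_right scaleR_sum_left sum_subtractf mult_ac)
  also have "\<dots> = 0"
    by (simp add: trace_ginv_gmat[OF q] meancurv_def)
  finally show ?thesis .
qed

lemma beta_nonzero:
  assumes q: "q \<in> U"
  shows "\<exists>a b. moeb_sff f q a b \<noteq> 0"
proof (rule ccontr)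
  assume "\<not> (\<exists>a b. moeb_sff f q a b \<noteq> 0)"
  then have "sff f q a b = gmat f q $ a $ b *\<^sub>R meancurv f q" for a b
    using rho_pos[OF q] by (auto simp: moeb_sff_def)
  then have "sff_norm2 f q = 2 * inner (meancurv f q) (meancurv f q)" by (rule sff_umbilic_norm[OF q])
  then have "rhoarg q = 0" unfolding rhoarg_def power2_norm_eq_inner by simp
  then show False using rhoarg_pos[OF q] by simp
qed

end
end


theorem corollary2p2:
  fixes U :: "(real^2) set" and f :: "real^2 \<Rightarrow> 'e::euclidean_space"
  assumes "immersion_on U f"
    and "umbilic_free U f"
    and "flat_normal_bundle U f"
  shows "semi_parallel_moeb_sff U f \<longleftrightarrow> (\<forall>p\<in>U. moeb_gauss f p = 0)"
proof -
  note imm = assms(1) and umb = assms(2)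
  define M where "M = moeb_metric f"
  have NC: "normal_curv f (\<lambda>q. moeb_sff f q k l) p i j = 0" if "p \<in> U" for p i j k l
    using assms(3) beta_normal_field[OF imm umb] that unfolding flat_normal_bundle_def by blast
  have cii: "curv M p i i k c = 0" for p i k c unfolding curv_def by simp
  have c21: "curv M p 2 1 k c = - curv M p 1 2 k c" for p k c
    unfolding curv_def by (simp add: sum_2 algebra_simps)
  have Msym: "M p $ 2 $ 1 = M p $ 1 $ 2" for p unfolding M_def by (simp add: moeb_metric_def gmat_def inner_commute)
  have detM: "det (M p) = M p $ 1 $ 1 * M p $ 2 $ 2 - M p $ 1 $ 2 * M p $ 1 $ 2" for p
    by (simp add: det_2 Msym)
  have detpos: "det (M p) > 0" if "p \<in> U" for p unfolding M_def by (rule det_M_pos[OF imm umb that])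
  have S: "curv M p 1 2 1 1 * M p $ 1 $ 1 + curv M p 1 2 1 2 * M p $ 1 $ 2 = 0"
          "curv M p 1 2 2 1 * M p $ 1 $ 2 + curv M p 1 2 2 2 * M p $ 2 $ 2 = 0"
          "curv M p 1 2 1 1 * M p $ 1 $ 2 + curv M p 1 2 1 2 * M p $ 2 $ 2
           + (curv M p 1 2 2 1 * M p $ 1 $ 1 + curv M p 1 2 2 2 * M p $ 1 $ 2) = 0"
    if p: "p \<in> U" for p
  proof -
    have A: "(\<Sum>c\<in>UNIV. curv M p 1 2 k c * M p $ c $ l) + (\<Sum>c\<in>UNIV. curv M p 1 2 l c * M p $ c $ k) = 0" for k l
      using curv_antisym_M[OF imm umb p] unfolding M_def .
    show "curv M p 1 2 1 1 * M p $ 1 $ 1 + curv M p 1 2 1 2 * M p $ 1 $ 2 = 0"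
      using A[of 1 1] by (simp add: sum_2 Msym; simp add: algebra_simps; linarith)
    show "curv M p 1 2 2 1 * M p $ 1 $ 2 + curv M p 1 2 2 2 * M p $ 2 $ 2 = 0"
      using A[of 2 2] by (simp add: sum_2 Msym; simp add: algebra_simps; linarith)
    show "curv M p 1 2 1 1 * M p $ 1 $ 2 + curv M p 1 2 1 2 * M p $ 2 $ 2
           + (curv M p 1 2 2 1 * M p $ 1 $ 1 + curv M p 1 2 2 2 * M p $ 1 $ 2) = 0"
      using A[of 1 2] by (simp add: sum_2 Msym; simp add: algebra_simps; linarith)
  qed
  have gauss: "moeb_gauss f p = (curv M p 1 2 2 1 * M p $ 1 $ 1 + curv M p 1 2 2 2 * M p $ 1 $ 2) / det (M p)" for p
    unfolding moeb_gauss_def moeb_curv_eq M_def[symmetric] by (simp add: sum_2 Msym)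
  have gauss0: "moeb_gauss f p = 0 \<longleftrightarrow> curv M p 1 2 2 1 * M p $ 1 $ 1 + curv M p 1 2 2 2 * M p $ 1 $ 2 = 0"
    if p: "p \<in> U" for p
    using detpos[OF p] unfolding gauss by simp
  show ?thesis
  proof
    assume semi: "semi_parallel_moeb_sff U f"
    show "\<forall>p\<in>U. moeb_gauss f p = 0"
    proof (intro ballI, rule ccontr)
      fix p assume p: "p \<in> U" and K: "moeb_gauss f p \<noteq> 0"
      let ?r = "curv M p 1 2" and ?b = "\<lambda>a b. moeb_sff f p a b"
      have sne: "?r 2 1 * M p $ 1 $ 1 + ?r 2 2 * M p $ 1 $ 2 \<noteq> 0" using K gauss0[OF p] by simp
      have E: "(\<Sum>c\<in>UNIV. ?r k c *\<^sub>R ?b c l) + (\<Sum>c\<in>UNIV. ?r l c *\<^sub>R ?b k c) = 0" for k l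
      proof -
        have "normal_curv f (\<lambda>q. moeb_sff f q k l) p 1 2
          - (\<Sum>c\<in>UNIV. moeb_curv f p 1 2 k c *\<^sub>R moeb_sff f p c l)
          - (\<Sum>c\<in>UNIV. moeb_curv f p 1 2 l c *\<^sub>R moeb_sff f p k c) = 0"
          using semi p unfolding semi_parallel_moeb_sff_def by blast
        then show ?thesis using NC[OF p] unfolding moeb_curv_eq M_def[symmetric]
          by (simp add: algebra_simps neg_eq_iff_add_eq_0)
      qed
      have bs: "?b 2 1 = ?b 1 2" using beta_sym[OF imm umb p] by simp
      have zero: "inner (?b 1 1) w = 0 \<and> inner (?b 1 2) w = 0 \<and> inner (?b 2 2) w = 0" for w
      proof -
        define x where "x a b = inner (?b a b) w" for a b
        have xs: "x 2 1 = x 1 2" unfolding x_def bs ..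
        have Ex: "(\<Sum>c\<in>UNIV. ?r k c * x c l) + (\<Sum>c\<in>UNIV. ?r l c * x k c) = 0" for k l
          using arg_cong[OF E[of k l], of "\<lambda>v. inner v w"] unfolding x_def
          by (simp add: inner_add_left inner_sum_left)
        have E11: "?r 1 1 * x 1 1 + ?r 1 2 * x 1 2 = 0" using Ex[of 1 1] xs by (simp add: sum_2; simp add: algebra_simps; linarith)
        have E22: "?r 2 1 * x 1 2 + ?r 2 2 * x 2 2 = 0" using Ex[of 2 2] xs by (simp add: sum_2; simp add: algebra_simps; linarith)
        have E12: "?r 1 1 * x 1 2 + ?r 1 2 * x 2 2 + ?r 2 1 * x 1 1 + ?r 2 2 * x 1 2 = 0"
          using Ex[of 1 2] xs by (simp add: sum_2; simp add: algebra_simps; linarith)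
        have tr: "M p $ 2 $ 2 * x 1 1 - 2 * M p $ 1 $ 2 * x 1 2 + M p $ 1 $ 1 * x 2 2 = 0"
        proof -
          have dg: "det (gmat f p) \<noteq> 0" using gmat_pos(1)[OF imm p] by simp
          have "(\<Sum>a\<in>UNIV. \<Sum>b\<in>UNIV. ginv f p $ a $ b * x a b) = 0"
            using arg_cong[OF beta_trace[OF imm umb p], of "\<lambda>v. inner v w"] unfolding x_def
            by (simp add: inner_sum_left)
          then have "(gmat f p $ 2 $ 2 * x 1 1 - gmat f p $ 1 $ 2 * x 1 2 - gmat f p $ 2 $ 1 * x 2 1
               + gmat f p $ 1 $ 1 * x 2 2) / det (gmat f p) = 0"
            unfolding ginv_def by (simp add: sum_2 inv2_entries[OF dg] add_divide_distrib diff_divide_distrib)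
          then have "gmat f p $ 2 $ 2 * x 1 1 - 2 * gmat f p $ 1 $ 2 * x 1 2 + gmat f p $ 1 $ 1 * x 2 2 = 0"
            using dg xs by (simp add: gmat_def inner_commute algebra_simps)
          then have "(rho f p)^2 * (gmat f p $ 2 $ 2 * x 1 1 - 2 * gmat f p $ 1 $ 2 * x 1 2 + gmat f p $ 1 $ 1 * x 2 2) = 0"
            by simp
          then show ?thesis unfolding M_def moeb_metric_def by (simp add: algebra_simps)
        qed
        have hM11: "M p $ 1 $ 1 > 0"
          using gmat_pos(2)[OF imm p] rho_pos[OF imm umb p] unfolding M_def moeb_metric_def
          by (simp add: mult_pos_pos)
        have hD: "M p $ 1 $ 1 * M p $ 2 $ 2 - M p $ 1 $ 2 * M p $ 1 $ 2 > 0"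
          using detpos[OF p] detM[of p] by simp
        have "x 1 1 = 0 \<and> x 1 2 = 0 \<and> x 2 2 = 0"
          by (rule alg2s[OF hM11 hD S(1)[OF p] S(2)[OF p] S(3)[OF p] sne E11 E22 E12 tr])
        then show ?thesis unfolding x_def by simp
      qed
      have "?b a b = 0" for a b
        using zero[of "?b a b"] bs exhaust_2[of a] exhaust_2[of b] by auto
      then show False using beta_nonzero[OF imm umb p] by blast
    qed
  next
    assume K: "\<forall>p\<in>U. moeb_gauss f p = 0"
    show "semi_parallel_moeb_sff U f"
      unfolding semi_parallel_moeb_sff_def
    proof (intro ballI allI)
      fix p i j k l assume p: "p \<in> U"
      have s0: "curv M p 1 2 2 1 * M p $ 1 $ 1 + curv M p 1 2 2 2 * M p $ 1 $ 2 = 0"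
        using K p gauss0[OF p] by simp
      have "curv M p 1 2 1 1 = 0 \<and> curv M p 1 2 1 2 = 0 \<and> curv M p 1 2 2 1 = 0 \<and> curv M p 1 2 2 2 = 0"
        by (rule alg1s[OF _ S(1)[OF p] S(2)[OF p] S(3)[OF p] s0]) (use detpos[OF p] detM[of p] in simp)
      then have r0: "curv M p 1 2 k' c = 0" for k' c using exhaust_2[of k'] exhaust_2[of c] by auto
      have z: "curv M p i j k' c = 0" for k' c
        using exhaust_2[of i] exhaust_2[of j] r0 cii c21 by auto
      show "normal_curv f (\<lambda>q. moeb_sff f q k l) p i j
        - (\<Sum>c\<in>UNIV. moeb_curv f p i j k c *\<^sub>R moeb_sff f p c l)
        - (\<Sum>c\<in>UNIV. moeb_curv f p i j l c *\<^sub>R moeb_sff f p k c) = 0"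
        unfolding moeb_curv_eq M_def[symmetric] using z NC[OF p] by simp
    qed
  qed
qed

end
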